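(* Let $\alpha_1,\alpha_2,\beta_1,\beta_2,\gamma\in\widehat{\mathbb{F}_q^\times}$ with $\gamma\notin\{\alpha_1\alpha_2,\beta_1\beta_2,\alpha_1\beta_2,\alpha_2\beta_1,\alpha_1\alpha_2\beta_1\beta_2\}$ and $\varepsilon\notin\{\alpha_1,\alpha_2,\beta_1,\beta_2\}$. Then for $\lambda\in\mathbb{F}_q$, $\lambda\neq1$, $$\alpha_1\alpha_2\beta_1\overline{\gamma}(1-\lambda)\,F_3\!\left({\alpha_1,\alpha_2;\beta_1,\beta_2\atop\gamma};\lambda,\frac{\lambda}{\lambda-1}\right)=F_3\!\left({\overline{\alpha_2\beta_1}\gamma,\alpha_1\alpha_2\beta_1\beta_2\overline{\gamma};\overline{\alpha_1\alpha_2}\gamma,\alpha_2\atop\gamma};\lambda,\frac{\lambda}{\lambda-1}\right).$$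
   Context: $\mathbb{F}_q$ is a finite field with $q$ elements. $\widehat{\mathbb{F}_q^\times}$ is the group of multiplicative characters $\mathbb{F}_q^\times\to\overline{\mathbb{Q}}^\times$, $\varepsilon$ the trivial character; every character (including $\varepsilon$) is extended by $0$ at $0$; $\overline{\eta}=\eta^{-1}$, $\overline{\eta_1\eta_2}=(\eta_1\eta_2)^{-1}$; $\delta(\eta)=1$ if $\eta=\varepsilon$, else $0$. $\psi$ is a fixed non-trivial additive character. $g(\eta)=-\sum_{x\in\mathbb{F}_q^\times}\psi(x)\eta(x)$, $g^\circ(\eta)=q^{\delta(\eta)}g(\eta)$, $(\alpha)_\nu=g(\alpha\nu)/g(\alpha)$, $(\alpha)^\circ_\nu=g^\circ(\alpha\nu)/g^\circ(\alpha)$. For $x,y\in\mathbb{F}_q$, $F_3\!\left({\alpha_1,\alpha_2;\beta_1,\beta_2\atop\gamma};x,y\right)=\frac{1}{(1-q)^2}\sum_{\nu_1,\nu_2\in\widehat{\mathbb{F}_q^\times}}\frac{(\alpha_1)_{\nu_1}(\alpha_2)_{\nu_2}(\beta_1)_{\nu_1}(\beta_2)_{\nu_2}}{(\gamma)^\circ_{\nu_1\nu_2}(\varepsilon)^\circ_{\nu_1}(\varepsilon)^\circ_{\nu_2}}\nu_1(x)\nu_2(y)$. *)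

theory Defs
  imports Complex_Main
begin

text \<open>Finite field: a type of class field and finite. Characters take values in complex
  numbers (containing the algebraic closure of the rationals).\<close>

definition mult_char :: "('a::{field,finite} \<Rightarrow> complex) \<Rightarrow> bool" where
  "mult_char \<chi> \<longleftrightarrow> \<chi> 0 = 0 \<and> (\<forall>x. x \<noteq> 0 \<longrightarrow> \<chi> x \<noteq> 0)
     \<and> (\<forall>x y. x \<noteq> 0 \<longrightarrow> y \<noteq> 0 \<longrightarrow> \<chi> (x * y) = \<chi> x * \<chi> y)"

definition chars :: "('a::{field,finite} \<Rightarrow> complex) set" where
  "chars = {\<chi>. mult_char \<chi>}"

definition triv_char :: "'a::{field,finite} \<Rightarrow> complex" ("\<epsilon>") where
  "\<epsilon> x = (if x = 0 then 0 else 1)"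

definition char_mult :: "('a::{field,finite} \<Rightarrow> complex) \<Rightarrow> ('a \<Rightarrow> complex) \<Rightarrow> 'a \<Rightarrow> complex" where
  "char_mult \<chi> \<eta> x = \<chi> x * \<eta> x"

definition char_inv :: "('a::{field,finite} \<Rightarrow> complex) \<Rightarrow> 'a \<Rightarrow> complex" where
  "char_inv \<chi> x = (if x = 0 then 0 else inverse (\<chi> x))"

definition add_char :: "('a::{field,finite} \<Rightarrow> complex) \<Rightarrow> bool" where
  "add_char \<psi> \<longleftrightarrow> (\<forall>x y. \<psi> (x + y) = \<psi> x * \<psi> y) \<and> (\<forall>x. \<psi> x \<noteq> 0)"

definition nontriv_add_char :: "('a::{field,finite} \<Rightarrow> complex) \<Rightarrow> bool" where
  "nontriv_add_char \<psi> \<longleftrightarrow> add_char \<psi> \<and> (\<exists>x. \<psi> x \<noteq> 1)"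

definition delta_char :: "('a::{field,finite} \<Rightarrow> complex) \<Rightarrow> nat" where
  "delta_char \<eta> = (if \<eta> = \<epsilon> then 1 else 0)"

definition gauss :: "('a::{field,finite} \<Rightarrow> complex) \<Rightarrow> ('a \<Rightarrow> complex) \<Rightarrow> complex" where
  "gauss \<psi> \<eta> = - (\<Sum>x\<in>UNIV - {0}. \<psi> x * \<eta> x)"

definition gauss0 :: "('a::{field,finite} \<Rightarrow> complex) \<Rightarrow> ('a \<Rightarrow> complex) \<Rightarrow> complex" where
  "gauss0 \<psi> \<eta> = of_nat (card (UNIV :: 'a set)) ^ delta_char \<eta> * gauss \<psi> \<eta>"

definition poch :: "('a::{field,finite} \<Rightarrow> complex) \<Rightarrow> ('a \<Rightarrow> complex) \<Rightarrow> ('a \<Rightarrow> complex) \<Rightarrow> complex" where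
  "poch \<psi> \<alpha> \<nu> = gauss \<psi> (char_mult \<alpha> \<nu>) / gauss \<psi> \<alpha>"

definition poch0 :: "('a::{field,finite} \<Rightarrow> complex) \<Rightarrow> ('a \<Rightarrow> complex) \<Rightarrow> ('a \<Rightarrow> complex) \<Rightarrow> complex" where
  "poch0 \<psi> \<alpha> \<nu> = gauss0 \<psi> (char_mult \<alpha> \<nu>) / gauss0 \<psi> \<alpha>"

definition F3 :: "('a::{field,finite} \<Rightarrow> complex) \<Rightarrow> ('a \<Rightarrow> complex) \<Rightarrow> ('a \<Rightarrow> complex)
    \<Rightarrow> ('a \<Rightarrow> complex) \<Rightarrow> ('a \<Rightarrow> complex) \<Rightarrow> ('a \<Rightarrow> complex) \<Rightarrow> 'a \<Rightarrow> 'a \<Rightarrow> complex" where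
  "F3 \<psi> a1 a2 b1 b2 c x y =
     1 / (1 - of_nat (card (UNIV :: 'a set)))^2 *
     (\<Sum>\<nu>1\<in>chars. \<Sum>\<nu>2\<in>chars.
        poch \<psi> a1 \<nu>1 * poch \<psi> a2 \<nu>2 * poch \<psi> b1 \<nu>1 * poch \<psi> b2 \<nu>2
        / (poch0 \<psi> c (char_mult \<nu>1 \<nu>2) * poch0 \<psi> \<epsilon> \<nu>1 * poch0 \<psi> \<epsilon> \<nu>2)
        * \<nu>1 x * \<nu>2 y)"

end

theory Submission
  imports Defs "HOL-Algebra.Multiplicative_Group" "HOL-Analysis.Complex_Transcendental"
begin

definition tring :: "'a::field ring" where
  "tring = \<lparr>carrier = UNIV, monoid.mult = (\<lambda>x y. x * y), one = 1, ring.zero = 0, add = (\<lambda>x y. x + y)\<rparr>"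

lemma tring_field: "field (tring :: 'a::field ring)"
proof -
  have "\<exists>y. x + y = 0" for x :: 'a
    using add.right_inverse by blast
  moreover have "x \<noteq> 0 \<Longrightarrow> \<exists>y. x * y = 1" for x :: 'a
    by (rule exI[of _ "inverse x"]) auto
  ultimately show ?thesis
    unfolding tring_def
    by unfold_locales (auto simp: algebra_simps Units_def)
qed

lemma tring_pow: "x [^]\<^bsub>(tring::'a::field ring)\<^esub> (i::nat) = x ^ i"
  by (induction i) (auto simp: tring_def)

lemma exists_gen:
  "\<exists>a::'a::{field,finite}. a \<noteq> 0 \<and> (\<forall>x. x \<noteq> 0 \<longrightarrow> (\<exists>i. x = a ^ i))"
proof -
  interpret field "tring :: 'a ring" by (rule tring_field)
  have "finite (carrier (tring :: 'a ring))" by simp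
  from finite_field_mult_group_has_gen[OF this] obtain a where
    a: "a \<in> carrier (mult_of (tring::'a ring))"
    "carrier (mult_of (tring::'a ring)) = {a[^]\<^bsub>tring\<^esub> i | i::nat . i \<in> UNIV}"
    by blast
  have "a \<noteq> 0" using a(1) by (simp add: tring_def)
  moreover have "\<forall>x. x \<noteq> 0 \<longrightarrow> (\<exists>i. x = a ^ i)"
  proof (intro allI impI)
    fix x :: 'a assume "x \<noteq> 0"
    hence "x \<in> carrier (mult_of (tring::'a ring))" by (simp add: tring_def)
    with a(2) show "\<exists>i. x = a ^ i" by (auto simp: tring_pow)
  qed
  ultimately show ?thesis by blast
qed

lemma pow_card_minus_1:
  fixes x :: "'a::{field,finite}"
  assumes "x \<noteq> 0"
  shows "x ^ (CARD('a) - 1) = 1"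
proof -
  interpret field "tring :: 'a ring" by (rule tring_field)
  interpret G: group "mult_of (tring :: 'a ring)" by (rule field_mult_group)
  have fin: "finite (carrier (tring :: 'a ring))" by simp
  have "x \<in> carrier (mult_of (tring :: 'a ring))" using assms by (simp add: tring_def)
  hence "x [^]\<^bsub>mult_of tring\<^esub> order (mult_of (tring :: 'a ring)) = \<one>\<^bsub>mult_of tring\<^esub>"
    using G.pow_order_eq_1 finite_mult_of[OF fin] by blast
  moreover have "order (mult_of (tring :: 'a ring)) = CARD('a) - 1"
    using order_mult_of[OF fin] by (simp add: order_def tring_def)
  ultimately show ?thesis by (simp add: nat_pow_mult_of tring_pow) (simp add: tring_def)
qed


lemma mc_0: "mult_char \<omega> \<Longrightarrow> \<omega> 0 = 0" by (simp add: mult_char_def)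
lemma mc_nz: "mult_char \<omega> \<Longrightarrow> x \<noteq> 0 \<Longrightarrow> \<omega> x \<noteq> 0" by (simp add: mult_char_def)
lemma mc_mult: "mult_char \<omega> \<Longrightarrow> x \<noteq> 0 \<Longrightarrow> y \<noteq> 0 \<Longrightarrow> \<omega> (x * y) = \<omega> x * \<omega> y"
  by (simp add: mult_char_def)
lemma mc_mult': "mult_char \<omega> \<Longrightarrow> \<omega> (x * y) = \<omega> x * \<omega> y"
  by (cases "x = 0 \<or> y = 0") (auto simp: mult_char_def)
lemma mc_1: assumes "mult_char \<omega>" shows "\<omega> 1 = 1"
proof -
  have "\<omega> 1 = \<omega> 1 * \<omega> 1" using mc_mult[OF assms, of 1 1] by simp
  moreover have "\<omega> 1 \<noteq> 0" using mc_nz[OF assms] by simp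
  ultimately show ?thesis by (metis mult_cancel_left2)
qed
lemma mc_inverse: assumes "mult_char \<omega>" shows "\<omega> (inverse x) = inverse (\<omega> x)"
proof (cases "x = 0")
  case True thus ?thesis using mc_0[OF assms] by simp
next
  case False
  have "\<omega> (inverse x) * \<omega> x = 1" using mc_mult'[OF assms, of "inverse x" x] False mc_1[OF assms] by simp
  thus ?thesis by (metis inverse_unique mult.commute)
qed
lemma mc_divide: "mult_char \<omega> \<Longrightarrow> \<omega> (x / y) = \<omega> x / \<omega> y"
  by (simp add: divide_inverse mc_mult' mc_inverse)
lemma mc_power: "mult_char \<omega> \<Longrightarrow> \<omega> (x ^ k) = \<omega> x ^ k"
  by (induction k) (auto simp: mc_mult' mc_1)
lemma mc_m1: assumes "mult_char \<omega>" shows "\<omega> (-1) * \<omega> (-1) = 1"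
  using mc_mult'[OF assms, of "-1" "-1"] mc_1[OF assms] by simp
lemma mc_uminus: assumes "mult_char \<omega>" shows "\<omega> (- x) = \<omega> (-1) * \<omega> x"
  using mc_mult'[OF assms, of "-1" x] by simp

lemma chars_iff: "\<omega> \<in> chars \<longleftrightarrow> mult_char \<omega>" by (simp add: chars_def)

lemma mc_root:
  fixes \<omega> :: "'a::{field,finite} \<Rightarrow> complex"
  assumes "mult_char \<omega>" "x \<noteq> 0"
  shows "\<omega> x ^ (CARD('a) - 1) = 1"
  using mc_power[OF assms(1), of x "CARD('a) - 1"] pow_card_minus_1[OF assms(2)] mc_1[OF assms(1)]
  by simp

lemma card_ge2: "CARD('a::{field,finite}) \<ge> 2"
proof -
  have "{0,1::'a} \<subseteq> UNIV" by simp
  hence "card {0,1::'a} \<le> CARD('a)" by (intro card_mono) simp_all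
  thus ?thesis by simp
qed

lemma chars_finite: "finite (chars :: ('a::{field,finite} \<Rightarrow> complex) set)"
proof -
  define R where "R = insert 0 {z::complex. z ^ (CARD('a) - 1) = 1}"
  have "finite R" unfolding R_def using card_ge2[where 'a='a]
    by (metis (no_types) One_nat_def Suc_1 Suc_le_lessD card.infinite finite_insert less_imp_neq
        card_roots_unity_eq zero_less_diff)
  have "chars \<subseteq> Pi\<^sub>E (UNIV::'a set) (\<lambda>_. R)"
  proof
    fix \<omega> :: "'a \<Rightarrow> complex" assume "\<omega> \<in> chars"
    hence m: "mult_char \<omega>" by (simp add: chars_def)
    have "\<omega> x \<in> R" for x
      using mc_root[OF m, of x] mc_0[OF m] by (cases "x = 0") (auto simp: R_def)
    thus "\<omega> \<in> Pi\<^sub>E UNIV (\<lambda>_. R)" by (simp add: PiE_UNIV_domain)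
  qed
  moreover have "finite (Pi\<^sub>E (UNIV::'a set) (\<lambda>_. R))"
    using \<open>finite R\<close> by (intro finite_PiE) auto
  ultimately show ?thesis by (rule finite_subset)
qed

lemma triv_char_chars: "\<epsilon> \<in> chars"
  by (simp add: chars_def mult_char_def triv_char_def)

lemma char_mult_chars: "\<omega> \<in> chars \<Longrightarrow> \<eta> \<in> chars \<Longrightarrow> char_mult \<omega> \<eta> \<in> chars"
  by (simp add: chars_def mult_char_def char_mult_def)

lemma char_inv_chars: "\<omega> \<in> chars \<Longrightarrow> char_inv \<omega> \<in> chars"
  by (simp add: chars_def mult_char_def char_inv_def)

lemma char_inv_val: "\<omega> \<in> chars \<Longrightarrow> char_inv \<omega> x = inverse (\<omega> x)"
  by (simp add: chars_def mult_char_def char_inv_def)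

lemma char_mult_val: "char_mult \<omega> \<eta> x = \<omega> x * \<eta> x"
  by (simp add: char_mult_def)

lemma char_mult_triv: "\<omega> \<in> chars \<Longrightarrow> char_mult \<epsilon> \<omega> = \<omega>"
  by (auto simp: fun_eq_iff char_mult_def triv_char_def chars_def mult_char_def)

lemma char_mult_inv: "\<omega> \<in> chars \<Longrightarrow> char_mult (char_inv \<omega>) \<omega> = \<epsilon>"
  by (auto simp: fun_eq_iff char_mult_def triv_char_def chars_def mult_char_def char_inv_def)

lemma char_mult_assoc: "char_mult (char_mult \<omega> \<eta>) \<theta> = char_mult \<omega> (char_mult \<eta> \<theta>)"
  by (simp add: fun_eq_iff char_mult_def mult.assoc)

lemma char_mult_comm: "char_mult \<omega> \<eta> = char_mult \<eta> \<omega>"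
  by (simp add: fun_eq_iff char_mult_def mult.commute)

lemma triv_ne: "\<omega> \<in> chars \<Longrightarrow> \<omega> \<noteq> \<epsilon> \<Longrightarrow> \<exists>x. x \<noteq> 0 \<and> \<omega> x \<noteq> 1"
  by (auto simp: fun_eq_iff triv_char_def chars_def mult_char_def split: if_splits)

lemma sum_char_UNIV:
  fixes \<omega> :: "'a::{field,finite} \<Rightarrow> complex"
  assumes "\<omega> \<in> chars" "\<omega> \<noteq> \<epsilon>"
  shows "(\<Sum>x\<in>UNIV. \<omega> x) = 0"
proof -
  have m: "mult_char \<omega>" using assms by (simp add: chars_def)
  obtain x0 where x0: "x0 \<noteq> 0" "\<omega> x0 \<noteq> 1" using triv_ne[OF assms] by blast
  have "(\<Sum>x\<in>UNIV. \<omega> (x0 * x)) = (\<Sum>x\<in>UNIV. \<omega> x)"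
    by (rule sum.reindex_bij_witness[of _ "\<lambda>y. y / x0" "\<lambda>x. x0 * x"]) (use x0 in auto)
  moreover have "(\<Sum>x\<in>UNIV. \<omega> (x0 * x)) = \<omega> x0 * (\<Sum>x\<in>UNIV. \<omega> x)"
    by (simp add: mc_mult'[OF m] sum_distrib_left)
  ultimately have "(\<omega> x0 - 1) * (\<Sum>x\<in>UNIV. \<omega> x) = 0" by (simp add: algebra_simps)
  thus ?thesis using x0 by simp
qed

lemma sum_nz_eq_UNIV:
  assumes "f 0 = 0" shows "(\<Sum>x\<in>UNIV - {0}. f x) = (\<Sum>x\<in>UNIV. f (x::'a::{field,finite}))"
  using assms sum.remove[of UNIV 0 f] by simp

lemma sum_char_nz:
  fixes \<omega> :: "'a::{field,finite} \<Rightarrow> complex"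
  assumes "\<omega> \<in> chars"
  shows "(\<Sum>x\<in>UNIV - {0}. \<omega> x) = (if \<omega> = \<epsilon> then of_nat (CARD('a) - 1) else 0)"
proof (cases "\<omega> = \<epsilon>")
  case True
  have "(\<Sum>x\<in>UNIV - {0::'a}. (1::complex)) = of_nat (CARD('a) - 1)"
    by (simp add: card_Diff_singleton)
  moreover have "(\<Sum>x\<in>UNIV - {0::'a}. \<omega> x) = (\<Sum>x\<in>UNIV - {0::'a}. (1::complex))"
    by (rule sum.cong) (auto simp: True triv_char_def)
  ultimately show ?thesis using True by simp
next
  case False
  have m: "mult_char \<omega>" using assms by (simp add: chars_def)
  show ?thesis using False sum_char_UNIV[OF assms False] sum_nz_eq_UNIV[of \<omega>] mc_0[OF m] by simp
qed


lemma pow_mod_card: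
  fixes a :: "'a::{field,finite}"
  assumes "a \<noteq> 0"
  shows "a ^ k = a ^ (k mod (CARD('a) - 1))"
proof -
  define n where "n = CARD('a) - 1"
  have an: "a ^ n = 1" using pow_card_minus_1[OF assms] by (simp add: n_def)
  have e: "n * (k div n) + k mod n = k" by simp
  have "a ^ k = (a ^ n) ^ (k div n) * a ^ (k mod n)" by (metis e power_add power_mult)
  thus ?thesis using an by (simp add: n_def)
qed

lemma gen_pow_mod:
  fixes a :: "'a::{field,finite}"
  assumes a: "a \<noteq> 0" "\<forall>x. x \<noteq> 0 \<longrightarrow> (\<exists>i. x = a ^ i)"
      and eq: "a ^ i = a ^ j"
  shows "i mod (CARD('a) - 1) = j mod (CARD('a) - 1)"
proof -
  define n where "n = CARD('a) - 1"
  have n1: "n \<ge> 1" using card_ge2[where 'a='a] by (simp add: n_def)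
  have an: "a ^ n = 1" using pow_card_minus_1[OF a(1)] by (simp add: n_def)
  have pm: "a ^ k = a ^ (k mod n)" for k unfolding n_def by (rule pow_mod_card[OF a(1)])
  have img: "(\<lambda>k. a ^ k) ` {..<n} = UNIV - {0}"
  proof
    show "(\<lambda>k. a ^ k) ` {..<n} \<subseteq> UNIV - {0}" using a(1) by auto
    show "UNIV - {0} \<subseteq> (\<lambda>k. a ^ k) ` {..<n}"
    proof
      fix x assume "x \<in> UNIV - {0::'a}"
      then obtain i where "x = a ^ i" using a(2) by auto
      hence "x = a ^ (i mod n)" using pm by metis
      moreover have "i mod n < n" using n1 by simp
      ultimately show "x \<in> (\<lambda>k. a ^ k) ` {..<n}" by blast
    qed
  qed
  have "card (UNIV - {0::'a}) = n" by (simp add: card_Diff_singleton n_def)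
  hence inj: "inj_on (\<lambda>k. a ^ k) {..<n}"
    using img by (simp add: inj_on_iff_eq_card)
  have e2: "a ^ (i mod n) = a ^ (j mod n)" using eq pm by metis
  have "i mod n \<in> {..<n}" "j mod n \<in> {..<n}" using n1 by simp_all
  hence "i mod n = j mod n" using inj_onD[OF inj e2] by blast
  thus ?thesis by (simp add: n_def)
qed

lemma exists_char_ne1:
  fixes b :: "'a::{field,finite}"
  assumes "b \<noteq> 0" "b \<noteq> 1"
  shows "\<exists>\<omega>\<in>chars. \<omega> b \<noteq> 1"
proof -
  obtain a :: 'a where a: "a \<noteq> 0" "\<forall>x. x \<noteq> 0 \<longrightarrow> (\<exists>i. x = a ^ i)" using exists_gen by blast
  define n where "n = CARD('a) - 1"
  have n1: "1 \<le> n" using card_ge2[where 'a='a] by (simp add: n_def)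
  define E where "E = (\<lambda>j::nat. exp (2 * of_real pi * \<i> * of_nat j / of_nat n))"
  have E_eq: "E i = E j \<longleftrightarrow> i mod n = j mod n" for i j
    unfolding E_def by (rule complex_root_unity_eq[OF n1])
  have E_add: "E (i + j) = E i * E j" for i j
    unfolding E_def by (simp add: add_divide_distrib distrib_left exp_add)
  define L where "L = (\<lambda>x::'a. SOME i. x = a ^ i)"
  have L: "x \<noteq> 0 \<Longrightarrow> x = a ^ L x" for x
    unfolding L_def using a(2) by (metis (mono_tags) someI_ex)
  define \<omega> where "\<omega> = (\<lambda>x::'a. if x = 0 then 0 else E (L x))"
  have "mult_char \<omega>"
    unfolding mult_char_def
  proof (intro conjI allI impI)
    show "\<omega> 0 = 0" by (simp add: \<omega>_def)
    fix x :: 'a assume "x \<noteq> 0" thus "\<omega> x \<noteq> 0" by (simp add: \<omega>_def E_def)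
  next
    fix x y :: 'a assume xy: "x \<noteq> 0" "y \<noteq> 0"
    have "a ^ L (x * y) = a ^ (L x + L y)"
      proof -
      have "a ^ L (x * y) = x * y" using L[of "x*y"] xy by simp
      also have "\<dots> = a ^ L x * a ^ L y" using L[OF xy(1)] L[OF xy(2)] by simp
      finally show ?thesis by (simp add: power_add)
    qed
    hence "L (x * y) mod n = (L x + L y) mod n" using gen_pow_mod[OF a(1) a(2)] unfolding n_def by blast
    hence "E (L (x * y)) = E (L x + L y)" using E_eq by blast
    hence "E (L (x * y)) = E (L x) * E (L y)" using E_add by simp
    thus "\<omega> (x * y) = \<omega> x * \<omega> y" using xy by (simp add: \<omega>_def)
  qed
  moreover have "\<omega> b \<noteq> 1"
  proof
    assume "\<omega> b = 1"
    hence "E (L b) = E 0" using assms by (simp add: \<omega>_def E_def)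
    hence "L b mod n = 0 mod n" using E_eq by blast
    hence "a ^ L b = a ^ 0" using pow_mod_card[OF a(1), of "L b"] unfolding n_def by (metis mod_0 power_0)
    thus False using L[OF assms(1)] assms(2) by simp
  qed
  ultimately show ?thesis unfolding chars_def by blast
qed


lemma char_mult_inv2: "\<omega> \<in> chars \<Longrightarrow> char_mult \<omega> (char_inv \<omega>) = \<epsilon>"
  using char_mult_inv char_mult_comm by metis

lemma chars_reindex:
  fixes \<omega>1 :: "'a::{field,finite} \<Rightarrow> complex"
  assumes "\<omega>1 \<in> chars"
  shows "(\<Sum>\<omega>\<in>chars. f (char_mult \<omega>1 \<omega>)) = (\<Sum>\<omega>\<in>chars. f \<omega>)"
proof (rule sum.reindex_bij_witness[of _ "char_mult (char_inv \<omega>1)" "char_mult \<omega>1"])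
  fix \<omega> :: "'a \<Rightarrow> complex" assume w: "\<omega> \<in> chars"
  show "char_mult (char_inv \<omega>1) (char_mult \<omega>1 \<omega>) = \<omega>"
    using w assms by (simp add: char_mult_assoc[symmetric] char_mult_inv char_mult_triv)
  show "char_mult \<omega>1 (char_mult (char_inv \<omega>1) \<omega>) = \<omega>"
    using w assms by (simp add: char_mult_assoc[symmetric] char_mult_inv2 char_mult_triv)
  show "char_mult \<omega>1 \<omega> \<in> chars" by (rule char_mult_chars[OF assms w])
  show "char_mult (char_inv \<omega>1) \<omega> \<in> chars" by (rule char_mult_chars[OF char_inv_chars[OF assms] w])
qed simp

lemma orth_ne1:
  fixes b :: "'a::{field,finite}"
  assumes "b \<noteq> 0" "b \<noteq> 1"
  shows "(\<Sum>\<omega>\<in>chars. \<omega> b) = 0"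
proof -
  obtain \<omega>1 where w1: "\<omega>1 \<in> chars" "\<omega>1 b \<noteq> 1" using exists_char_ne1[OF assms] by blast
  have "(\<Sum>\<omega>\<in>chars. char_mult \<omega>1 \<omega> b) = (\<Sum>\<omega>\<in>chars. \<omega> b)"
    using chars_reindex[OF w1(1), of "\<lambda>\<omega>. \<omega> b"] by simp
  moreover have "(\<Sum>\<omega>\<in>chars. char_mult \<omega>1 \<omega> b) = \<omega>1 b * (\<Sum>\<omega>\<in>chars. \<omega> b)"
    by (simp add: char_mult_def sum_distrib_left)
  ultimately have "(\<omega>1 b - 1) * (\<Sum>\<omega>\<in>chars. \<omega> b) = 0" by (simp add: algebra_simps)
  thus ?thesis using w1 by simp
qed

lemma card_chars: "card (chars :: ('a::{field,finite} \<Rightarrow> complex) set) = CARD('a) - 1"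
proof -
  have A: "(\<Sum>x\<in>UNIV - {0::'a}. \<Sum>\<omega>\<in>(chars::('a \<Rightarrow> complex) set). \<omega> x)
        = (\<Sum>x\<in>UNIV - {0::'a}. if x = 1 then of_nat (card (chars::('a \<Rightarrow> complex) set)) else 0)"
  proof (rule sum.cong[OF refl])
    fix x :: 'a assume "x \<in> UNIV - {0}"
    thus "(\<Sum>\<omega>\<in>chars. \<omega> x) = (if x = 1 then of_nat (card (chars::('a \<Rightarrow> complex) set)) else 0)"
      using orth_ne1[of x] by (auto simp: chars_iff mc_1)
  qed
  also have "\<dots> = of_nat (card (chars::('a \<Rightarrow> complex) set))"
    by (simp add: sum.delta)
  finally have A': "(\<Sum>x\<in>UNIV - {0::'a}. \<Sum>\<omega>\<in>(chars::('a \<Rightarrow> complex) set). \<omega> x)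
      = of_nat (card (chars::('a \<Rightarrow> complex) set))" .
  have "(\<Sum>x\<in>UNIV - {0::'a}. \<Sum>\<omega>\<in>(chars::('a \<Rightarrow> complex) set). \<omega> x)
      = (\<Sum>\<omega>\<in>(chars::('a \<Rightarrow> complex) set). \<Sum>x\<in>UNIV - {0::'a}. \<omega> x)"
    by (rule sum.swap)
  also have "\<dots> = (\<Sum>\<omega>\<in>(chars::('a \<Rightarrow> complex) set). if \<omega> = \<epsilon> then of_nat (CARD('a) - 1) else 0)"
    by (rule sum.cong[OF refl]) (simp add: sum_char_nz)
  also have "\<dots> = of_nat (CARD('a) - 1)"
    by (subst sum.delta[OF chars_finite]) (simp add: triv_char_chars)
  finally have "(of_nat (card (chars::('a \<Rightarrow> complex) set)) :: complex) = of_nat (CARD('a) - 1)"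
    using A' by simp
  thus ?thesis using of_nat_eq_iff by blast
qed

lemma orth:
  fixes b :: "'a::{field,finite}"
  shows "(\<Sum>\<omega>\<in>chars. \<omega> b) = (if b = 1 then of_nat (CARD('a) - 1) else 0)"
proof -
  consider "b = 0" | "b = 1" | "b \<noteq> 0" "b \<noteq> 1" by blast
  thus ?thesis
  proof cases
    case 1 thus ?thesis by (simp add: chars_iff mc_0)
  next
    case 2 thus ?thesis by (simp add: chars_iff mc_1 card_chars)
  next
    case 3 thus ?thesis using orth_ne1 by simp
  qed
qed


context
  fixes \<psi> :: "'a::{field,finite} \<Rightarrow> complex"
  assumes psi: "nontriv_add_char \<psi>"
begin

lemma psi_add: "\<psi> (x + y) = \<psi> x * \<psi> y"
  using psi by (simp add: nontriv_add_char_def add_char_def)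

lemma psi_nz: "\<psi> x \<noteq> 0"
  using psi by (simp add: nontriv_add_char_def add_char_def)

lemma psi_0: "\<psi> 0 = 1"
proof -
  have "\<psi> 0 = \<psi> 0 * \<psi> 0" using psi_add[of 0 0] by simp
  thus ?thesis using psi_nz[of 0] by (metis mult_cancel_left2)
qed

lemma psi_sum_UNIV: "(\<Sum>x\<in>UNIV. \<psi> x) = 0"
proof -
  obtain x0 where x0: "\<psi> x0 \<noteq> 1" using psi by (auto simp: nontriv_add_char_def)
  have "(\<Sum>x\<in>UNIV. \<psi> (x0 + x)) = (\<Sum>x\<in>UNIV. \<psi> x)"
    by (rule sum.reindex_bij_witness[of _ "\<lambda>y. y - x0" "\<lambda>x. x0 + x"]) auto
  moreover have "(\<Sum>x\<in>UNIV. \<psi> (x0 + x)) = \<psi> x0 * (\<Sum>x\<in>UNIV. \<psi> x)"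
    by (simp add: psi_add sum_distrib_left)
  ultimately have "(\<psi> x0 - 1) * (\<Sum>x\<in>UNIV. \<psi> x) = 0" by (simp add: algebra_simps)
  thus ?thesis using x0 by simp
qed

lemma psi_sum_scaled: "(\<Sum>x\<in>UNIV. \<psi> (c * x)) = (if c = 0 then of_nat CARD('a) else 0)"
proof (cases "c = 0")
  case True thus ?thesis by (simp add: psi_0)
next
  case False
  have "(\<Sum>x\<in>UNIV. \<psi> (c * x)) = (\<Sum>x\<in>UNIV. \<psi> x)"
    by (rule sum.reindex_bij_witness[of _ "\<lambda>y. y / c" "\<lambda>x. c * x"]) (use False in auto)
  thus ?thesis using False psi_sum_UNIV by simp
qed

lemma psi_sum_scaled_nz:
  "(\<Sum>x\<in>UNIV - {0}. \<psi> (c * x)) = (if c = 0 then of_nat CARD('a) - 1 else - 1)"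
proof -
  have "(\<Sum>x\<in>UNIV. \<psi> (c * x)) = \<psi> (c * 0) + (\<Sum>x\<in>UNIV - {0}. \<psi> (c * x))"
    by (rule sum.remove) auto
  hence "(\<Sum>x\<in>UNIV - {0}. \<psi> (c * x)) = (\<Sum>x\<in>UNIV. \<psi> (c * x)) - 1" by (simp add: psi_0)
  also have "\<dots> = (if c = 0 then of_nat CARD('a) else 0) - 1" by (simp only: psi_sum_scaled)
  finally show ?thesis by simp
qed

lemma gauss_triv: "gauss \<psi> \<epsilon> = 1"
proof -
  have "(\<Sum>x\<in>UNIV - {0}. \<psi> x * \<epsilon> x) = (\<Sum>x\<in>UNIV - {0}. \<psi> (1 * x))"
    by (rule sum.cong) (auto simp: triv_char_def)
  also have "\<dots> = - 1" by (simp only: psi_sum_scaled_nz) simp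
  finally show ?thesis by (simp add: gauss_def)
qed

lemma gauss_twist:
  assumes "\<omega> \<in> chars" "c \<noteq> 0"
  shows "(\<Sum>x\<in>UNIV - {0}. \<psi> (c * x) * \<omega> x) = - char_inv \<omega> c * gauss \<psi> \<omega>"
proof -
  have m: "mult_char \<omega>" using assms by (simp add: chars_iff)
  have "(\<Sum>x\<in>UNIV - {0}. \<psi> x * \<omega> x) = (\<Sum>x\<in>UNIV - {0}. \<psi> (c * x) * \<omega> (c * x))"
    by (rule sum.reindex_bij_witness[of _ "\<lambda>x. c * x" "\<lambda>y. y / c"]) (use assms in auto)
  also have "\<dots> = \<omega> c * (\<Sum>x\<in>UNIV - {0}. \<psi> (c * x) * \<omega> x)"
    by (simp add: mc_mult'[OF m] sum_distrib_left mult_ac)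
  finally have "(\<Sum>x\<in>UNIV - {0}. \<psi> (c * x) * \<omega> x) = inverse (\<omega> c) * (\<Sum>x\<in>UNIV - {0}. \<psi> x * \<omega> x)"
    using mc_nz[OF m assms(2)] by (simp add: field_simps)
  thus ?thesis by (simp add: gauss_def char_inv_val[OF assms(1)])
qed

lemma gauss_twist':
  assumes "\<omega> \<in> chars" "\<omega> \<noteq> \<epsilon>"
  shows "(\<Sum>x\<in>UNIV - {0}. \<psi> (c * x) * \<omega> x) = - char_inv \<omega> c * gauss \<psi> \<omega>"
proof (cases "c = 0")
  case True
  have m: "mult_char \<omega>" using assms by (simp add: chars_iff)
  have "(\<Sum>x\<in>UNIV - {0}. \<psi> (c * x) * \<omega> x) = (\<Sum>x\<in>UNIV - {0}. \<omega> x)"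
    using True by (simp add: psi_0)
  thus ?thesis using True sum_char_nz[OF assms(1)] assms(2) by (simp add: char_inv_def)
qed (rule gauss_twist[OF assms(1)])

lemma char_inv_triv: "char_inv \<epsilon> = \<epsilon>"
  by (auto simp: fun_eq_iff char_inv_def triv_char_def)

lemma char_inv_inv: "\<omega> \<in> chars \<Longrightarrow> char_inv (char_inv \<omega>) = \<omega>"
  by (auto simp: fun_eq_iff char_inv_def chars_iff mult_char_def)

lemma char_inv_ne_triv: "\<omega> \<in> chars \<Longrightarrow> \<omega> \<noteq> \<epsilon> \<Longrightarrow> char_inv \<omega> \<noteq> \<epsilon>"
  using char_inv_inv char_inv_triv by metis

lemma gauss_prod:
  assumes "\<omega> \<in> chars"
  shows "gauss \<psi> \<omega> * gauss0 \<psi> (char_inv \<omega>) = \<omega> (-1) * of_nat CARD('a)"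
proof (cases "\<omega> = \<epsilon>")
  case True
  thus ?thesis by (simp add: gauss0_def delta_char_def char_inv_triv gauss_triv triv_char_def)
next
  case False
  have m: "mult_char \<omega>" using assms by (simp add: chars_iff)
  have ni: "char_inv \<omega> \<noteq> \<epsilon>" using char_inv_ne_triv[OF assms False] .
  have g0: "gauss0 \<psi> (char_inv \<omega>) = gauss \<psi> (char_inv \<omega>)"
    using ni by (simp add: gauss0_def delta_char_def)
  define S where "S = (\<Sum>x\<in>UNIV - {0}. \<psi> x * \<omega> x)"
  have inner: "S = (\<Sum>t\<in>UNIV - {0}. \<psi> (y * t) * \<omega> y * \<omega> t)" if y: "y \<noteq> 0" for y
    unfolding S_def
  proof (rule sum.reindex_bij_witness[of _ "\<lambda>t. y * t" "\<lambda>x. x / y"])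
    fix x :: 'a assume "x \<in> UNIV - {0}"
    have "\<omega> y * \<omega> (x / y) = \<omega> (y * (x / y))" by (rule mc_mult'[OF m, symmetric])
    also have "\<dots> = \<omega> x" using y by simp
    finally show "\<psi> (y * (x / y)) * \<omega> y * \<omega> (x / y) = \<psi> x * \<omega> x"
      using y by (simp add: mult.assoc)
  qed (use y in auto)
  have "gauss \<psi> \<omega> * gauss \<psi> (char_inv \<omega>) = gauss \<psi> (char_inv \<omega>) * gauss \<psi> \<omega>"
    by (rule mult.commute)
  also have "\<dots> = (\<Sum>y\<in>UNIV - {0}. \<psi> y * char_inv \<omega> y * S)"
    unfolding gauss_def S_def[symmetric] by (simp add: sum_distrib_right)
  also have "\<dots> = (\<Sum>y\<in>UNIV - {0}. \<Sum>t\<in>UNIV - {0}. \<psi> (y * (1 + t)) * \<omega> t)"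
  proof (rule sum.cong[OF refl])
    fix y :: 'a assume "y \<in> UNIV - {0}"
    hence y: "y \<noteq> 0" by simp
    have "\<psi> y * char_inv \<omega> y * S = (\<Sum>t\<in>UNIV - {0}. (char_inv \<omega> y * \<omega> y) * (\<psi> y * \<psi> (y * t)) * \<omega> t)"
      by (simp add: inner[OF y] sum_distrib_left mult_ac)
    also have "\<dots> = (\<Sum>t\<in>UNIV - {0}. \<psi> (y * (1 + t)) * \<omega> t)"
      using mc_nz[OF m y] by (simp add: char_inv_val[OF assms] psi_add[symmetric] distrib_left)
    finally show "\<psi> y * char_inv \<omega> y * S = (\<Sum>t\<in>UNIV - {0}. \<psi> (y * (1 + t)) * \<omega> t)" .
  qed
  also have "\<dots> = (\<Sum>t\<in>UNIV - {0}. \<omega> t * (\<Sum>y\<in>UNIV - {0}. \<psi> ((1 + t) * y)))"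
    by (subst sum.swap) (simp add: sum_distrib_left mult_ac)
  also have "\<dots> = (\<Sum>t\<in>UNIV - {0}. \<omega> t * (if t = -1 then of_nat CARD('a) else 0) - \<omega> t)"
  proof (rule sum.cong[OF refl])
    fix t :: 'a
    have i: "1 + t = 0 \<longleftrightarrow> t = -1" by (rule add_eq_0_iff)
    have e: "(\<Sum>y\<in>UNIV - {0}. \<psi> ((1 + t) * y)) = (if t = -1 then of_nat CARD('a) - 1 else - 1)"
      by (subst psi_sum_scaled_nz) (simp only: i)
    show "\<omega> t * (\<Sum>y\<in>UNIV - {0}. \<psi> ((1 + t) * y)) = \<omega> t * (if t = -1 then of_nat CARD('a) else 0) - \<omega> t"
      unfolding e by (simp add: algebra_simps)
  qed
  also have "\<dots> = (\<Sum>t\<in>UNIV - {0}. if t = -1 then \<omega> t * of_nat CARD('a) else 0) - (\<Sum>t\<in>UNIV - {0}. \<omega> t)"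
    by (subst sum_subtractf[symmetric]) (rule sum.cong, auto)
  also have "\<dots> = \<omega> (-1) * of_nat CARD('a)"
    using sum_char_nz[OF assms] False by (simp add: sum.delta)
  finally show ?thesis using g0 by simp
qed

lemma gauss_nz:
  assumes "\<omega> \<in> chars" shows "gauss \<psi> \<omega> \<noteq> 0"
proof
  assume "gauss \<psi> \<omega> = 0"
  hence "\<omega> (-1) * of_nat CARD('a) = 0" using gauss_prod[OF assms] by simp
  moreover have "\<omega> (-1) \<noteq> 0" using mc_nz[of \<omega> "-1"] assms by (simp add: chars_iff)
  ultimately show False by simp
qed

lemma gauss0_nz:
  assumes "\<omega> \<in> chars" shows "gauss0 \<psi> \<omega> \<noteq> 0"
proof
  assume "gauss0 \<psi> \<omega> = 0"
  hence "char_inv \<omega> (-1) * of_nat CARD('a) = 0"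
    using gauss_prod[OF char_inv_chars[OF assms]] char_inv_inv[OF assms] by simp
  moreover have "char_inv \<omega> (-1) \<noteq> 0"
    using mc_nz[of "char_inv \<omega>" "-1"] char_inv_chars[OF assms] by (simp add: chars_iff)
  ultimately show False by simp
qed

end


context
  fixes \<psi> :: "'a::{field,finite} \<Rightarrow> complex"
  assumes psi: "nontriv_add_char \<psi>"
begin

lemma m1sq: "\<omega> \<in> chars \<Longrightarrow> \<omega> (-1) * \<omega> (-1) = 1"
  using mc_m1 by (auto simp: chars_iff)

lemma inv_m1: "\<omega> \<in> chars \<Longrightarrow> inverse (\<omega> (-1)) = \<omega> (-1)"
  using m1sq[of \<omega>] by (metis inverse_unique)

lemma inv_gauss0:
  assumes "\<omega> \<in> chars"
  shows "inverse (gauss0 \<psi> \<omega>) = \<omega> (-1) * gauss \<psi> (char_inv \<omega>) / of_nat CARD('a)"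
proof -
  have e: "gauss \<psi> (char_inv \<omega>) * gauss0 \<psi> \<omega> = \<omega> (-1) * of_nat CARD('a)"
    using gauss_prod[OF psi char_inv_chars[OF assms]] char_inv_inv[OF psi assms]
      char_inv_val[OF assms, of "-1"] inv_m1[OF assms] by simp
  have nz: "gauss0 \<psi> \<omega> \<noteq> 0" by (rule gauss0_nz[OF psi assms])
  have q: "(of_nat CARD('a) :: complex) \<noteq> 0" by simp
  have "inverse (gauss0 \<psi> \<omega>) = gauss \<psi> (char_inv \<omega>) / (\<omega> (-1) * of_nat CARD('a))"
    using e nz m1sq[OF assms] by (auto simp: field_simps)
  also have "\<dots> = \<omega> (-1) * gauss \<psi> (char_inv \<omega>) / of_nat CARD('a)"
    using inv_m1[OF assms] by (simp add: divide_inverse mult_ac)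
  finally show ?thesis .
qed

lemma gauss0_triv: "gauss0 \<psi> \<epsilon> = of_nat CARD('a)"
  by (simp add: gauss0_def delta_char_def gauss_triv[OF psi])

lemma char_inv_mult_val:
  "\<omega> \<in> chars \<Longrightarrow> \<eta> \<in> chars \<Longrightarrow> char_inv (char_mult \<omega> \<eta>) s = char_inv \<omega> s * char_inv \<eta> s"
  by (simp add: char_inv_val char_mult_chars char_mult_val)

lemma coeff:
  assumes ch: "A1 \<in> chars" "A2 \<in> chars" "B1 \<in> chars" "B2 \<in> chars" "G \<in> chars"
      and nu: "\<nu>1 \<in> chars" "\<nu>2 \<in> chars"
  shows "poch \<psi> A1 \<nu>1 * poch \<psi> A2 \<nu>2 * poch \<psi> B1 \<nu>1 * poch \<psi> B2 \<nu>2
          / (poch0 \<psi> G (char_mult \<nu>1 \<nu>2) * poch0 \<psi> \<epsilon> \<nu>1 * poch0 \<psi> \<epsilon> \<nu>2)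
       = (G (-1) * gauss0 \<psi> G / (of_nat CARD('a) * gauss \<psi> A1 * gauss \<psi> B1 * gauss \<psi> A2 * gauss \<psi> B2))
         * (gauss \<psi> (char_mult A1 \<nu>1) * gauss \<psi> (char_mult B1 \<nu>1) * gauss \<psi> (char_inv \<nu>1))
         * (gauss \<psi> (char_mult A2 \<nu>2) * gauss \<psi> (char_mult B2 \<nu>2) * gauss \<psi> (char_inv \<nu>2))
         * gauss \<psi> (char_inv (char_mult G (char_mult \<nu>1 \<nu>2)))"
proof -
  define \<mu> where "\<mu> = char_mult G (char_mult \<nu>1 \<nu>2)"
  have mu: "\<mu> \<in> chars" unfolding \<mu>_def by (intro char_mult_chars ch nu)
  have mum1: "\<mu> (-1) = G (-1) * \<nu>1 (-1) * \<nu>2 (-1)" by (simp add: \<mu>_def char_mult_val mult_ac)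
  have i1: "inverse (gauss0 \<psi> \<mu>) = \<mu> (-1) * gauss \<psi> (char_inv \<mu>) / of_nat CARD('a)"
    by (rule inv_gauss0[OF mu])
  have i2: "inverse (gauss0 \<psi> \<nu>1) = \<nu>1 (-1) * gauss \<psi> (char_inv \<nu>1) / of_nat CARD('a)"
    by (rule inv_gauss0[OF nu(1)])
  have i3: "inverse (gauss0 \<psi> \<nu>2) = \<nu>2 (-1) * gauss \<psi> (char_inv \<nu>2) / of_nat CARD('a)"
    by (rule inv_gauss0[OF nu(2)])
  have p0G: "poch0 \<psi> G (char_mult \<nu>1 \<nu>2) = gauss0 \<psi> \<mu> / gauss0 \<psi> G"
    by (simp add: poch0_def \<mu>_def)
  have p01: "poch0 \<psi> \<epsilon> \<nu>1 = gauss0 \<psi> \<nu>1 / of_nat CARD('a)"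
    by (simp add: poch0_def char_mult_triv[OF nu(1)] gauss0_triv)
  have p02: "poch0 \<psi> \<epsilon> \<nu>2 = gauss0 \<psi> \<nu>2 / of_nat CARD('a)"
    by (simp add: poch0_def char_mult_triv[OF nu(2)] gauss0_triv)
  have nz: "gauss0 \<psi> \<mu> \<noteq> 0" "gauss0 \<psi> \<nu>1 \<noteq> 0" "gauss0 \<psi> \<nu>2 \<noteq> 0" "gauss0 \<psi> G \<noteq> 0"
    using gauss0_nz[OF psi] mu nu ch by auto
  have nz2: "gauss \<psi> A1 \<noteq> 0" "gauss \<psi> A2 \<noteq> 0" "gauss \<psi> B1 \<noteq> 0" "gauss \<psi> B2 \<noteq> 0"
    using gauss_nz[OF psi] ch by auto
  have sq: "\<nu>1 (-1) * \<nu>1 (-1) = 1" "\<nu>2 (-1) * \<nu>2 (-1) = 1" using m1sq nu by auto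
  define X where "X = gauss \<psi> (char_mult A1 \<nu>1) * gauss \<psi> (char_mult A2 \<nu>2)
       * gauss \<psi> (char_mult B1 \<nu>1) * gauss \<psi> (char_mult B2 \<nu>2)"
  have "poch \<psi> A1 \<nu>1 * poch \<psi> A2 \<nu>2 * poch \<psi> B1 \<nu>1 * poch \<psi> B2 \<nu>2
          / (poch0 \<psi> G (char_mult \<nu>1 \<nu>2) * poch0 \<psi> \<epsilon> \<nu>1 * poch0 \<psi> \<epsilon> \<nu>2)
      = X / (gauss \<psi> A1 * gauss \<psi> A2 * gauss \<psi> B1 * gauss \<psi> B2) * gauss0 \<psi> G
        * of_nat CARD('a) * of_nat CARD('a)
        * inverse (gauss0 \<psi> \<mu>) * inverse (gauss0 \<psi> \<nu>1) * inverse (gauss0 \<psi> \<nu>2)"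
    unfolding p0G p01 p02 X_def poch_def using nz nz2
    by (simp add: field_simps)
  also have "\<dots> = X / (gauss \<psi> A1 * gauss \<psi> A2 * gauss \<psi> B1 * gauss \<psi> B2) * gauss0 \<psi> G
        * (\<mu> (-1) * \<nu>1 (-1) * \<nu>2 (-1)) / of_nat CARD('a)
        * gauss \<psi> (char_inv \<mu>) * gauss \<psi> (char_inv \<nu>1) * gauss \<psi> (char_inv \<nu>2)"
    unfolding i1 i2 i3 by (simp add: field_simps)
  also have "\<mu> (-1) * \<nu>1 (-1) * \<nu>2 (-1) = G (-1)"
    unfolding mum1 using sq by (simp add: algebra_simps)
  finally show ?thesis unfolding \<mu>_def[symmetric] X_def using nz2
    by (simp add: field_simps)
qed

end


lemma OC:
  fixes z :: "'a::{field,finite}"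
  assumes z: "z \<noteq> 0" and I: "finite I" and e: "\<And>i. i \<in> I \<Longrightarrow> e i \<noteq> 0"
  shows "(\<Sum>\<nu>\<in>chars. (\<Sum>i\<in>I. u i * \<nu> (e i)) * (\<Sum>c\<in>UNIV - {0}. w c * \<nu> (z / c)))
       = of_nat (CARD('a) - 1) * (\<Sum>i\<in>I. u i * w (e i * z))"
proof -
  have "(\<Sum>\<nu>\<in>chars. (\<Sum>i\<in>I. u i * \<nu> (e i)) * (\<Sum>c\<in>UNIV - {0}. w c * \<nu> (z / c)))
      = (\<Sum>\<nu>\<in>chars. \<Sum>i\<in>I. \<Sum>c\<in>UNIV - {0}. u i * w c * (\<nu> (e i) * \<nu> (z / c)))"
    by (simp add: sum_product mult_ac)
  also have "\<dots> = (\<Sum>\<nu>\<in>chars. \<Sum>i\<in>I. \<Sum>c\<in>UNIV - {0}. u i * w c * \<nu> (e i * z / c))"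
    by (intro sum.cong refl) (simp add: chars_iff mc_mult'[symmetric])
  also have "\<dots> = (\<Sum>i\<in>I. \<Sum>\<nu>\<in>chars. \<Sum>c\<in>UNIV - {0}. u i * w c * \<nu> (e i * z / c))"
    by (rule sum.swap)
  also have "\<dots> = (\<Sum>i\<in>I. \<Sum>c\<in>UNIV - {0}. \<Sum>\<nu>\<in>chars. u i * w c * \<nu> (e i * z / c))"
    by (intro sum.cong refl) (rule sum.swap)
  also have "\<dots> = (\<Sum>i\<in>I. \<Sum>c\<in>UNIV - {0}. u i * w c * (\<Sum>\<nu>\<in>chars. \<nu> (e i * z / c)))"
    by (simp add: sum_distrib_left)
  also have "\<dots> = (\<Sum>i\<in>I. \<Sum>c\<in>UNIV - {0}. if c = e i * z then u i * w c * of_nat (CARD('a) - 1) else 0)"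
  proof (intro sum.cong refl)
    fix i c assume i: "i \<in> I" and c: "c \<in> UNIV - {0::'a}"
    have "e i * z / c = 1 \<longleftrightarrow> c = e i * z" using c by (auto simp: field_simps)
    thus "u i * w c * (\<Sum>\<nu>\<in>chars. \<nu> (e i * z / c)) =
          (if c = e i * z then u i * w c * of_nat (CARD('a) - 1) else 0)"
      by (simp only: orth) simp
  qed
  also have "\<dots> = (\<Sum>i\<in>I. u i * w (e i * z) * of_nat (CARD('a) - 1))"
  proof (intro sum.cong refl)
    fix i assume i: "i \<in> I"
    have "e i * z \<in> UNIV - {0}" using e[OF i] z by simp
    thus "(\<Sum>c\<in>UNIV - {0}. if c = e i * z then u i * w c * of_nat (CARD('a) - 1) else 0)
        = u i * w (e i * z) * of_nat (CARD('a) - 1)"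
      by (subst sum.delta) auto
  qed
  also have "\<dots> = of_nat (CARD('a) - 1) * (\<Sum>i\<in>I. u i * w (e i * z))"
    by (simp add: sum_distrib_left mult_ac)
  finally show ?thesis .
qed

context
  fixes \<psi> :: "'a::{field,finite} \<Rightarrow> complex"
  assumes psi: "nontriv_add_char \<psi>"
begin

lemma gauss_pair:
  assumes "A \<in> chars" "B \<in> chars" "\<nu> \<in> chars"
  shows "gauss \<psi> (char_mult A \<nu>) * gauss \<psi> (char_mult B \<nu>)
       = (\<Sum>p\<in>(UNIV - {0}) \<times> (UNIV - {0}). (\<psi> (fst p) * A (fst p) * \<psi> (snd p) * B (snd p)) * \<nu> (fst p * snd p))"
proof -
  have m: "mult_char \<nu>" using assms by (simp add: chars_iff)
  have "gauss \<psi> (char_mult A \<nu>) * gauss \<psi> (char_mult B \<nu>)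
      = (\<Sum>a\<in>UNIV - {0}. \<Sum>b\<in>UNIV - {0}. (\<psi> a * (A a * \<nu> a)) * (\<psi> b * (B b * \<nu> b)))"
    by (simp add: gauss_def char_mult_def sum_product)
  also have "\<dots> = (\<Sum>a\<in>UNIV - {0}. \<Sum>b\<in>UNIV - {0}. (\<psi> a * A a * \<psi> b * B b) * \<nu> (a * b))"
    by (intro sum.cong refl) (simp add: mc_mult'[OF m] mult_ac)
  also have "\<dots> = (\<Sum>p\<in>(UNIV - {0}) \<times> (UNIV - {0}). (\<psi> (fst p) * A (fst p) * \<psi> (snd p) * B (snd p)) * \<nu> (fst p * snd p))"
    by (subst sum.cartesian_product) (simp add: case_prod_beta)
  finally show ?thesis .
qed

lemma gauss_inv_twist:
  assumes "\<nu> \<in> chars"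
  shows "gauss \<psi> (char_inv \<nu>) * \<nu> z = (\<Sum>c\<in>UNIV - {0}. (- \<psi> c) * \<nu> (z / c))"
proof -
  have m: "mult_char \<nu>" using assms by (simp add: chars_iff)
  have "gauss \<psi> (char_inv \<nu>) * \<nu> z = (\<Sum>c\<in>UNIV - {0}. (- \<psi> c) * (\<nu> z * char_inv \<nu> c))"
    by (simp add: gauss_def sum_distrib_right sum_distrib_left sum_negf mult_ac)
  also have "\<dots> = (\<Sum>c\<in>UNIV - {0}. (- \<psi> c) * \<nu> (z / c))"
    by (intro sum.cong refl) (simp only: divide_inverse mc_mult'[OF m] mc_inverse[OF m] char_inv_val[OF assms])
  finally show ?thesis .
qed

lemma H_lemma:
  assumes ch: "A \<in> chars" "B \<in> chars" and A: "A \<noteq> \<epsilon>" and z: "z \<noteq> 0"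
  shows "(\<Sum>\<nu>\<in>chars. gauss \<psi> (char_mult A \<nu>) * gauss \<psi> (char_mult B \<nu>) * gauss \<psi> (char_inv \<nu>) * \<nu> z)
       = of_nat (CARD('a) - 1) * gauss \<psi> A * (\<Sum>b\<in>UNIV - {0}. \<psi> b * B b * char_inv A (1 + b * z))"
proof -
  define u where "u = (\<lambda>p::'a \<times> 'a. \<psi> (fst p) * A (fst p) * \<psi> (snd p) * B (snd p))"
  define e where "e = (\<lambda>p::'a \<times> 'a. fst p * snd p)"
  define w where "w = (\<lambda>c::'a. - \<psi> c)"
  have "(\<Sum>\<nu>\<in>chars. gauss \<psi> (char_mult A \<nu>) * gauss \<psi> (char_mult B \<nu>) * gauss \<psi> (char_inv \<nu>) * \<nu> z)
      = (\<Sum>\<nu>\<in>chars. (\<Sum>p\<in>(UNIV - {0}) \<times> (UNIV - {0}). u p * \<nu> (e p)) * (\<Sum>c\<in>UNIV - {0}. w c * \<nu> (z / c)))"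
  proof (intro sum.cong refl)
    fix \<nu> :: "'a \<Rightarrow> complex" assume nu: "\<nu> \<in> chars"
    have "gauss \<psi> (char_mult A \<nu>) * gauss \<psi> (char_mult B \<nu>) * gauss \<psi> (char_inv \<nu>) * \<nu> z
        = (gauss \<psi> (char_mult A \<nu>) * gauss \<psi> (char_mult B \<nu>)) * (gauss \<psi> (char_inv \<nu>) * \<nu> z)"
      by (simp only: mult.assoc)
    also have "\<dots> = (\<Sum>p\<in>(UNIV - {0}) \<times> (UNIV - {0}). u p * \<nu> (e p)) * (\<Sum>c\<in>UNIV - {0}. w c * \<nu> (z / c))"
      unfolding gauss_pair[OF ch nu] gauss_inv_twist[OF nu] u_def e_def w_def ..
    finally show "gauss \<psi> (char_mult A \<nu>) * gauss \<psi> (char_mult B \<nu>) * gauss \<psi> (char_inv \<nu>) * \<nu> z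
        = (\<Sum>p\<in>(UNIV - {0}) \<times> (UNIV - {0}). u p * \<nu> (e p)) * (\<Sum>c\<in>UNIV - {0}. w c * \<nu> (z / c))" .
  qed
  also have "\<dots> = of_nat (CARD('a) - 1) * (\<Sum>p\<in>(UNIV - {0}) \<times> (UNIV - {0}). u p * w (e p * z))"
    by (rule OC[OF z]) (auto simp: e_def)
  also have "(\<Sum>p\<in>(UNIV - {0}) \<times> (UNIV - {0}). u p * w (e p * z))
      = (\<Sum>a\<in>UNIV - {0}. \<Sum>b\<in>UNIV - {0}. u (a, b) * w (e (a, b) * z))"
    by (subst sum.cartesian_product) (simp add: case_prod_beta)
  also have "\<dots> = (\<Sum>b\<in>UNIV - {0}. \<Sum>a\<in>UNIV - {0}. u (a, b) * w (e (a, b) * z))"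
    by (rule sum.swap)
  also have "\<dots> = (\<Sum>b\<in>UNIV - {0}. - (\<psi> b * B b) * (\<Sum>a\<in>UNIV - {0}. \<psi> ((1 + b * z) * a) * A a))"
  proof (intro sum.cong refl)
    fix b :: 'a
    have "u (a, b) * w (e (a, b) * z) = - (\<psi> b * B b) * (\<psi> ((1 + b * z) * a) * A a)" for a
    proof -
      have "\<psi> ((1 + b * z) * a) = \<psi> a * \<psi> (a * b * z)"
        by (simp add: psi_add[OF psi, symmetric] algebra_simps)
      thus ?thesis by (simp add: u_def w_def e_def)
    qed
    thus "(\<Sum>a\<in>UNIV - {0}. u (a, b) * w (e (a, b) * z))
        = - (\<psi> b * B b) * (\<Sum>a\<in>UNIV - {0}. \<psi> ((1 + b * z) * a) * A a)"
      by (simp add: sum_distrib_left)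
  qed
  also have "\<dots> = (\<Sum>b\<in>UNIV - {0}. (\<psi> b * B b) * char_inv A (1 + b * z) * gauss \<psi> A)"
    by (intro sum.cong refl) (simp add: gauss_twist'[OF psi ch(1) A])
  finally show ?thesis by (simp add: sum_distrib_left sum_distrib_right mult_ac)
qed

end


context
  fixes \<psi> :: "'a::{field,finite} \<Rightarrow> complex"
  assumes psi: "nontriv_add_char \<psi>"
begin

lemma inv_times: "\<nu> \<in> chars \<Longrightarrow> char_inv \<nu> s * \<nu> x = \<nu> (x / s)"
  by (simp add: chars_iff char_inv_val divide_inverse mc_mult' mc_inverse mult.commute)

lemma step1:
  assumes ch: "G \<in> chars" and nu: "\<nu>1 \<in> chars" "\<nu>2 \<in> chars"
  shows "T1 * T2 * gauss \<psi> (char_inv (char_mult G (char_mult \<nu>1 \<nu>2))) * \<nu>1 x * \<nu>2 y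
       = (\<Sum>s\<in>UNIV - {0}. - (\<psi> s * char_inv G s) * (T1 * \<nu>1 (x / s)) * (T2 * \<nu>2 (y / s)))"
proof -
  have g: "gauss \<psi> (char_inv (char_mult G (char_mult \<nu>1 \<nu>2)))
       = - (\<Sum>s\<in>UNIV - {0}. \<psi> s * (char_inv G s * (char_inv \<nu>1 s * char_inv \<nu>2 s)))"
    unfolding gauss_def
    by (simp add: char_inv_mult_val[OF psi] char_mult_chars ch nu)
  have "T1 * T2 * gauss \<psi> (char_inv (char_mult G (char_mult \<nu>1 \<nu>2))) * \<nu>1 x * \<nu>2 y
      = (\<Sum>s\<in>UNIV - {0}. (T1 * T2 * \<nu>1 x * \<nu>2 y) * (- (\<psi> s * (char_inv G s * (char_inv \<nu>1 s * char_inv \<nu>2 s)))))"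
    unfolding g by (simp add: sum_distrib_left sum_negf mult_ac)
  also have "\<dots> = (\<Sum>s\<in>UNIV - {0}. - (\<psi> s * char_inv G s) * (T1 * (char_inv \<nu>1 s * \<nu>1 x)) * (T2 * (char_inv \<nu>2 s * \<nu>2 y)))"
    by (intro sum.cong refl) (simp add: mult_ac)
  also have "\<dots> = (\<Sum>s\<in>UNIV - {0}. - (\<psi> s * char_inv G s) * (T1 * \<nu>1 (x / s)) * (T2 * \<nu>2 (y / s)))"
    by (simp only: inv_times nu)
  finally show ?thesis .
qed

lemma triple_prod:
  fixes F :: complex
  shows "(\<Sum>i\<in>I. \<Sum>j\<in>J. F * a i * b j) = F * (\<Sum>i\<in>I. a i) * (\<Sum>j\<in>J. b j)"
proof -
  have "F * (\<Sum>i\<in>I. a i) * (\<Sum>j\<in>J. b j) = F * ((\<Sum>i\<in>I. a i) * (\<Sum>j\<in>J. b j))"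
    by (rule mult.assoc)
  also have "\<dots> = F * (\<Sum>i\<in>I. \<Sum>j\<in>J. a i * b j)" by (simp only: sum_product)
  also have "\<dots> = (\<Sum>i\<in>I. \<Sum>j\<in>J. F * (a i * b j))" by (simp only: sum_distrib_left)
  also have "\<dots> = (\<Sum>i\<in>I. \<Sum>j\<in>J. F * a i * b j)" by (simp only: mult.assoc)
  finally show ?thesis ..
qed

lemma step2:
  fixes F :: "'a \<Rightarrow> complex"
  shows "(\<Sum>\<nu>1\<in>chars. \<Sum>\<nu>2\<in>chars. \<Sum>s\<in>UNIV - {0}. F s * a \<nu>1 s * b \<nu>2 s)
       = (\<Sum>s\<in>UNIV - {0}. F s * (\<Sum>\<nu>1\<in>chars. a \<nu>1 s) * (\<Sum>\<nu>2\<in>chars. b \<nu>2 s))"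
proof -
  have "(\<Sum>\<nu>1\<in>chars. \<Sum>\<nu>2\<in>chars. \<Sum>s\<in>UNIV - {0}. F s * a \<nu>1 s * b \<nu>2 s)
      = (\<Sum>\<nu>1\<in>chars. \<Sum>s\<in>UNIV - {0}. \<Sum>\<nu>2\<in>chars. F s * a \<nu>1 s * b \<nu>2 s)"
    by (intro sum.cong refl) (rule sum.swap)
  also have "\<dots> = (\<Sum>s\<in>UNIV - {0}. \<Sum>\<nu>1\<in>chars. \<Sum>\<nu>2\<in>chars. F s * a \<nu>1 s * b \<nu>2 s)"
    by (rule sum.swap)
  also have "\<dots> = (\<Sum>s\<in>UNIV - {0}. F s * (\<Sum>\<nu>1\<in>chars. a \<nu>1 s) * (\<Sum>\<nu>2\<in>chars. b \<nu>2 s))"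
    by (intro sum.cong refl) (rule triple_prod)
  finally show ?thesis .
qed

lemma step4:
  assumes B: "B \<in> chars" and s: "s \<noteq> 0"
  shows "(\<Sum>b\<in>UNIV - {0}. \<psi> b * B b * char_inv A (1 + b * (z / s)))
       = B s * (\<Sum>u\<in>UNIV - {0}. \<psi> (s * u) * B u * char_inv A (1 + u * z))"
proof -
  have m: "mult_char B" using B by (simp add: chars_iff)
  have "(\<Sum>b\<in>UNIV - {0}. \<psi> b * B b * char_inv A (1 + b * (z / s)))
      = (\<Sum>u\<in>UNIV - {0}. \<psi> (s * u) * B (s * u) * char_inv A (1 + (s * u) * (z / s)))"
    by (rule sum.reindex_bij_witness[of _ "\<lambda>u. s * u" "\<lambda>b. b / s"]) (use s in auto)
  also have "\<dots> = (\<Sum>u\<in>UNIV - {0}. B s * (\<psi> (s * u) * B u * char_inv A (1 + u * z)))"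
  proof (intro sum.cong refl)
    fix u :: 'a
    have "(s * u) * (z / s) = u * z" using s by (simp add: field_simps)
    thus "\<psi> (s * u) * B (s * u) * char_inv A (1 + (s * u) * (z / s)) = B s * (\<psi> (s * u) * B u * char_inv A (1 + u * z))"
      by (simp add: mc_mult'[OF m] mult_ac)
  qed
  also have "\<dots> = B s * (\<Sum>u\<in>UNIV - {0}. \<psi> (s * u) * B u * char_inv A (1 + u * z))"
    by (simp add: sum_distrib_left)
  finally show ?thesis .
qed

end


context
  fixes \<psi> :: "'a::{field,finite} \<Rightarrow> complex"
  assumes psi: "nontriv_add_char \<psi>"
begin

lemma main_sum:
  assumes ch: "A1 \<in> chars" "A2 \<in> chars" "B1 \<in> chars" "B2 \<in> chars" "G \<in> chars"
      and A: "A1 \<noteq> \<epsilon>" "A2 \<noteq> \<epsilon>"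
      and X: "char_mult (char_mult B1 B2) (char_inv G) \<noteq> \<epsilon>"
      and xy: "x \<noteq> 0" "y \<noteq> 0"
  shows "(\<Sum>\<nu>1\<in>chars. \<Sum>\<nu>2\<in>chars.
            (gauss \<psi> (char_mult A1 \<nu>1) * gauss \<psi> (char_mult B1 \<nu>1) * gauss \<psi> (char_inv \<nu>1))
          * (gauss \<psi> (char_mult A2 \<nu>2) * gauss \<psi> (char_mult B2 \<nu>2) * gauss \<psi> (char_inv \<nu>2))
          * gauss \<psi> (char_inv (char_mult G (char_mult \<nu>1 \<nu>2))) * \<nu>1 x * \<nu>2 y)
       = of_nat (CARD('a) - 1) * of_nat (CARD('a) - 1) * gauss \<psi> A1 * gauss \<psi> A2
         * gauss \<psi> (char_mult (char_mult B1 B2) (char_inv G))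
         * (\<Sum>u\<in>UNIV. \<Sum>v\<in>UNIV. B1 u * B2 v * char_inv (char_mult (char_mult B1 B2) (char_inv G)) (1 + u + v)
              * char_inv A1 (1 + u * x) * char_inv A2 (1 + v * y))"
proof -
  define \<kappa> where "\<kappa> = char_mult (char_mult B1 B2) (char_inv G)"
  have chi: "\<kappa> \<in> chars" unfolding \<kappa>_def by (intro char_mult_chars char_inv_chars ch)
  define N :: complex where "N = of_nat (CARD('a) - 1)"
  define T1 where "T1 = (\<lambda>\<nu>. gauss \<psi> (char_mult A1 \<nu>) * gauss \<psi> (char_mult B1 \<nu>) * gauss \<psi> (char_inv \<nu>))"
  define T2 where "T2 = (\<lambda>\<nu>. gauss \<psi> (char_mult A2 \<nu>) * gauss \<psi> (char_mult B2 \<nu>) * gauss \<psi> (char_inv \<nu>))"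
  define P1 where "P1 = (\<lambda>s. \<Sum>u\<in>UNIV - {0}. \<psi> (s * u) * B1 u * char_inv A1 (1 + u * x))"
  define P2 where "P2 = (\<lambda>s. \<Sum>v\<in>UNIV - {0}. \<psi> (s * v) * B2 v * char_inv A2 (1 + v * y))"
  define Y where "Y = (\<lambda>u v. B1 u * B2 v * char_inv A1 (1 + u * x) * char_inv A2 (1 + v * y))"
  define U where "U = (UNIV - {0::'a})"
  have "(\<Sum>\<nu>1\<in>chars. \<Sum>\<nu>2\<in>chars. T1 \<nu>1 * T2 \<nu>2
          * gauss \<psi> (char_inv (char_mult G (char_mult \<nu>1 \<nu>2))) * \<nu>1 x * \<nu>2 y)
      = (\<Sum>\<nu>1\<in>chars. \<Sum>\<nu>2\<in>chars. \<Sum>s\<in>U. - (\<psi> s * char_inv G s) * (T1 \<nu>1 * \<nu>1 (x / s)) * (T2 \<nu>2 * \<nu>2 (y / s)))"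
    unfolding U_def by (intro sum.cong refl step1[OF psi ch(5)]) 
  also have "\<dots> = (\<Sum>s\<in>U. - (\<psi> s * char_inv G s) * (\<Sum>\<nu>1\<in>chars. T1 \<nu>1 * \<nu>1 (x / s)) * (\<Sum>\<nu>2\<in>chars. T2 \<nu>2 * \<nu>2 (y / s)))"
    unfolding U_def by (rule step2[OF psi])
  also have "\<dots> = (\<Sum>s\<in>U. - (\<psi> s * char_inv G s) * (N * gauss \<psi> A1 * (B1 s * P1 s)) * (N * gauss \<psi> A2 * (B2 s * P2 s)))"
  proof (intro sum.cong refl)
    fix s assume "s \<in> U"
    hence s: "s \<noteq> 0" by (simp add: U_def)
    have h1: "(\<Sum>\<nu>1\<in>chars. T1 \<nu>1 * \<nu>1 (x / s)) = N * gauss \<psi> A1 * (B1 s * P1 s)"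
      unfolding T1_def N_def P1_def
      using H_lemma[OF psi ch(1) ch(3) A(1), of "x / s"] step4[OF psi ch(3) s, of A1 x] xy s by simp
    have h2: "(\<Sum>\<nu>2\<in>chars. T2 \<nu>2 * \<nu>2 (y / s)) = N * gauss \<psi> A2 * (B2 s * P2 s)"
      unfolding T2_def N_def P2_def
      using H_lemma[OF psi ch(2) ch(4) A(2), of "y / s"] step4[OF psi ch(4) s, of A2 y] xy s by simp
    show "- (\<psi> s * char_inv G s) * (\<Sum>\<nu>1\<in>chars. T1 \<nu>1 * \<nu>1 (x / s)) * (\<Sum>\<nu>2\<in>chars. T2 \<nu>2 * \<nu>2 (y / s))
        = - (\<psi> s * char_inv G s) * (N * gauss \<psi> A1 * (B1 s * P1 s)) * (N * gauss \<psi> A2 * (B2 s * P2 s))"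
      by (simp only: h1 h2)
  qed
  also have "\<dots> = - (N * N * gauss \<psi> A1 * gauss \<psi> A2) * (\<Sum>s\<in>U. (\<psi> s * char_inv G s * B1 s * B2 s) * (P1 s * P2 s))"
    by (simp add: sum_distrib_left mult_ac)
  also have "(\<Sum>s\<in>U. (\<psi> s * char_inv G s * B1 s * B2 s) * (P1 s * P2 s))
      = (\<Sum>s\<in>U. \<Sum>u\<in>U. \<Sum>v\<in>U. Y u v * (\<psi> ((1 + u + v) * s) * \<kappa> s))"
  proof (intro sum.cong refl)
    fix s assume "s \<in> U"
    have "(\<psi> s * char_inv G s * B1 s * B2 s) * (P1 s * P2 s)
        = (\<Sum>u\<in>U. \<Sum>v\<in>U. (\<psi> s * char_inv G s * B1 s * B2 s) *
             ((\<psi> (s * u) * B1 u * char_inv A1 (1 + u * x)) * (\<psi> (s * v) * B2 v * char_inv A2 (1 + v * y))))"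
      unfolding P1_def P2_def U_def sum_product by (simp only: sum_distrib_left)
    also have "\<dots> = (\<Sum>u\<in>U. \<Sum>v\<in>U. Y u v * (\<psi> ((1 + u + v) * s) * \<kappa> s))"
    proof (intro sum.cong refl)
      fix u v
      have "\<psi> ((1 + u + v) * s) = \<psi> s * \<psi> (s * u) * \<psi> (s * v)"
        by (simp add: psi_add[OF psi, symmetric] algebra_simps)
      moreover have "\<kappa> s = B1 s * B2 s * char_inv G s"
        by (simp add: \<kappa>_def char_mult_val)
      ultimately show "(\<psi> s * char_inv G s * B1 s * B2 s) *
             ((\<psi> (s * u) * B1 u * char_inv A1 (1 + u * x)) * (\<psi> (s * v) * B2 v * char_inv A2 (1 + v * y)))
           = Y u v * (\<psi> ((1 + u + v) * s) * \<kappa> s)"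
        by (simp add: Y_def mult_ac)
    qed
    finally show "(\<psi> s * char_inv G s * B1 s * B2 s) * (P1 s * P2 s)
        = (\<Sum>u\<in>U. \<Sum>v\<in>U. Y u v * (\<psi> ((1 + u + v) * s) * \<kappa> s))" .
  qed
  also have "\<dots> = (\<Sum>u\<in>U. \<Sum>s\<in>U. \<Sum>v\<in>U. Y u v * (\<psi> ((1 + u + v) * s) * \<kappa> s))"
    by (rule sum.swap)
  also have "\<dots> = (\<Sum>u\<in>U. \<Sum>v\<in>U. \<Sum>s\<in>U. Y u v * (\<psi> ((1 + u + v) * s) * \<kappa> s))"
    by (rule sum.cong[OF refl], rule sum.swap)
  also have "\<dots> = (\<Sum>u\<in>U. \<Sum>v\<in>U. Y u v * (- char_inv \<kappa> (1 + u + v) * gauss \<psi> \<kappa>))"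
  proof (intro sum.cong refl)
    fix u v
    have "(\<Sum>s\<in>U. Y u v * (\<psi> ((1 + u + v) * s) * \<kappa> s)) = Y u v * (\<Sum>s\<in>U. \<psi> ((1 + u + v) * s) * \<kappa> s)"
      by (simp add: sum_distrib_left)
    also have "\<dots> = Y u v * (- char_inv \<kappa> (1 + u + v) * gauss \<psi> \<kappa>)"
      unfolding U_def using gauss_twist'[OF psi chi X[folded \<kappa>_def]] by simp
    finally show "(\<Sum>s\<in>U. Y u v * (\<psi> ((1 + u + v) * s) * \<kappa> s)) = Y u v * (- char_inv \<kappa> (1 + u + v) * gauss \<psi> \<kappa>)" .
  qed
  also have "\<dots> = - gauss \<psi> \<kappa> * (\<Sum>u\<in>U. \<Sum>v\<in>U. Y u v * char_inv \<kappa> (1 + u + v))"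
    by (simp add: sum_distrib_left sum_negf mult_ac)
  also have "(\<Sum>u\<in>U. \<Sum>v\<in>U. Y u v * char_inv \<kappa> (1 + u + v))
      = (\<Sum>u\<in>UNIV. \<Sum>v\<in>UNIV. B1 u * B2 v * char_inv \<kappa> (1 + u + v) * char_inv A1 (1 + u * x) * char_inv A2 (1 + v * y))"
  proof -
    have z1: "B1 0 = 0" "B2 0 = 0" using ch by (simp_all add: chars_iff mc_0)
    have "(\<Sum>u\<in>U. \<Sum>v\<in>U. Y u v * char_inv \<kappa> (1 + u + v))
        = (\<Sum>u\<in>UNIV. \<Sum>v\<in>U. Y u v * char_inv \<kappa> (1 + u + v))"
      unfolding U_def by (rule sum_nz_eq_UNIV) (simp add: Y_def z1)
    also have "\<dots> = (\<Sum>u\<in>UNIV. \<Sum>v\<in>UNIV. Y u v * char_inv \<kappa> (1 + u + v))"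
      unfolding U_def by (intro sum.cong refl sum_nz_eq_UNIV) (simp add: Y_def z1)
    finally show ?thesis by (simp add: Y_def mult_ac)
  qed
  finally show ?thesis
    unfolding T1_def T2_def N_def \<kappa>_def[symmetric] by (simp add: mult_ac)
qed

end


context
  fixes \<psi> :: "'a::{field,finite} \<Rightarrow> complex"
  assumes psi: "nontriv_add_char \<psi>"
begin

lemma REP:
  assumes ch: "A1 \<in> chars" "A2 \<in> chars" "B1 \<in> chars" "B2 \<in> chars" "G \<in> chars"
      and A: "A1 \<noteq> \<epsilon>" "A2 \<noteq> \<epsilon>"
      and X: "char_mult (char_mult B1 B2) (char_inv G) \<noteq> \<epsilon>"
      and xy: "x \<noteq> 0" "y \<noteq> 0"
  shows "F3 \<psi> A1 A2 B1 B2 G x y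
       = G (-1) * gauss0 \<psi> G * gauss \<psi> (char_mult (char_mult B1 B2) (char_inv G))
           / (of_nat CARD('a) * gauss \<psi> B1 * gauss \<psi> B2)
         * (\<Sum>u\<in>UNIV. \<Sum>v\<in>UNIV. B1 u * B2 v * char_inv (char_mult (char_mult B1 B2) (char_inv G)) (1 + u + v)
              * char_inv A1 (1 + u * x) * char_inv A2 (1 + v * y))"
proof -
  define K0 where "K0 = G (-1) * gauss0 \<psi> G / (of_nat CARD('a) * gauss \<psi> A1 * gauss \<psi> B1 * gauss \<psi> A2 * gauss \<psi> B2)"
  define N :: complex where "N = of_nat (CARD('a) - 1)"
  define S where "S = (\<Sum>u\<in>UNIV. \<Sum>v\<in>UNIV. B1 u * B2 v * char_inv (char_mult (char_mult B1 B2) (char_inv G)) (1 + u + v)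
              * char_inv A1 (1 + u * x) * char_inv A2 (1 + v * y))"
  define gk where "gk = gauss \<psi> (char_mult (char_mult B1 B2) (char_inv G))"
  have "F3 \<psi> A1 A2 B1 B2 G x y = 1 / (1 - of_nat CARD('a))^2 * (\<Sum>\<nu>1\<in>chars. \<Sum>\<nu>2\<in>chars. K0 *
            ((gauss \<psi> (char_mult A1 \<nu>1) * gauss \<psi> (char_mult B1 \<nu>1) * gauss \<psi> (char_inv \<nu>1))
          * (gauss \<psi> (char_mult A2 \<nu>2) * gauss \<psi> (char_mult B2 \<nu>2) * gauss \<psi> (char_inv \<nu>2))
          * gauss \<psi> (char_inv (char_mult G (char_mult \<nu>1 \<nu>2))) * \<nu>1 x * \<nu>2 y))"
    unfolding F3_def
  proof (intro arg_cong[where f = "\<lambda>t. 1 / (1 - of_nat CARD('a))^2 * t"] sum.cong refl)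
    fix \<nu>1 \<nu>2 :: "'a \<Rightarrow> complex" assume nu: "\<nu>1 \<in> chars" "\<nu>2 \<in> chars"
    show "poch \<psi> A1 \<nu>1 * poch \<psi> A2 \<nu>2 * poch \<psi> B1 \<nu>1 * poch \<psi> B2 \<nu>2 /
          (poch0 \<psi> G (char_mult \<nu>1 \<nu>2) * poch0 \<psi> \<epsilon> \<nu>1 * poch0 \<psi> \<epsilon> \<nu>2) * \<nu>1 x * \<nu>2 y
        = K0 * ((gauss \<psi> (char_mult A1 \<nu>1) * gauss \<psi> (char_mult B1 \<nu>1) * gauss \<psi> (char_inv \<nu>1))
          * (gauss \<psi> (char_mult A2 \<nu>2) * gauss \<psi> (char_mult B2 \<nu>2) * gauss \<psi> (char_inv \<nu>2))
          * gauss \<psi> (char_inv (char_mult G (char_mult \<nu>1 \<nu>2))) * \<nu>1 x * \<nu>2 y)"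
      unfolding coeff[OF psi ch nu] K0_def by (simp only: mult.assoc)
  qed
  also have "\<dots> = 1 / (1 - of_nat CARD('a))^2 * (K0 * (N * N * gauss \<psi> A1 * gauss \<psi> A2 * gk * S))"
    unfolding main_sum[OF psi ch A X xy, symmetric] N_def gk_def S_def
    by (simp only: sum_distrib_left)
  also have "(1 - of_nat CARD('a) :: complex)^2 = N * N"
  proof -
    have "CARD('a) \<ge> 1" using card_ge2[where 'a='a] by simp
    hence "N = of_nat CARD('a) - 1" unfolding N_def by (simp add: of_nat_diff)
    hence q: "(of_nat CARD('a) :: complex) = N + 1" by simp
    show ?thesis unfolding q by (simp add: power2_eq_square)
  qed
  finally have e: "F3 \<psi> A1 A2 B1 B2 G x y = 1 / (N * N) * (K0 * (N * N * gauss \<psi> A1 * gauss \<psi> A2 * gk * S))" .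
  have Nnz: "N \<noteq> 0" using card_ge2[where 'a='a] unfolding N_def by simp
  have gnz: "gauss \<psi> A1 \<noteq> 0" "gauss \<psi> A2 \<noteq> 0" "gauss \<psi> B1 \<noteq> 0" "gauss \<psi> B2 \<noteq> 0"
    using gauss_nz[OF psi] ch by auto
  show ?thesis unfolding e K0_def gk_def[symmetric] S_def[symmetric]
    using Nnz gnz by (simp add: field_simps)
qed

end


lemma mc_eq0: "mult_char \<omega> \<Longrightarrow> (\<omega> z = 0) \<longleftrightarrow> z = 0"
  using mc_0 mc_nz by metis

lemma sign_cases: assumes "\<omega> \<in> chars" shows "\<omega> (-1) = 1 \<or> \<omega> (-1) = -1"
proof -
  have "\<omega> (-1) * \<omega> (-1) = 1" using mc_m1 assms by (auto simp: chars_iff)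
  hence "(\<omega> (-1) - 1) * (\<omega> (-1) + 1) = 0" by (simp add: algebra_simps)
  thus ?thesis by (auto simp: eq_neg_iff_add_eq_0)
qed

definition phi :: "'a::field \<Rightarrow> 'a \<Rightarrow> 'a \<Rightarrow> 'a" where
  "phi x v u = - (1 + u + v) / (1 + u * x)"

lemma pointwise:
  fixes x u v :: "'a::{field,finite}"
  assumes ch: "a1 \<in> chars" "a2 \<in> chars" "b1 \<in> chars" "b2 \<in> chars" "c \<in> chars"
      and x: "x \<noteq> 0" "x \<noteq> 1" and uv: "u \<noteq> 0" "v \<noteq> 0" "1 + u + v \<noteq> 0" "1 + u * x \<noteq> 0"
      and w: "1 - x * (1 + v) \<noteq> 0"
  shows "char_mult (char_inv (char_mult a2 b1)) c (phi x v u) * a2 v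
          * char_inv (char_mult (char_mult (char_mult (char_inv (char_mult a2 b1)) c) a2) (char_inv c)) (1 + phi x v u + v)
          * char_inv (char_mult (char_inv (char_mult a1 a2)) c) (1 + phi x v u * x)
          * char_inv (char_mult (char_mult (char_mult (char_mult a1 a2) b1) b2) (char_inv c)) (1 + v * (x / (x - 1)))
       = a2 (-1) * c (-1) * char_mult (char_mult (char_mult a1 a2) b1) (char_inv c) (1 - x)
         * (b1 u * a2 v * char_inv (char_mult (char_mult b1 a2) (char_inv c)) (1 + u + v)
            * char_inv a1 (1 + u * x) * char_inv b2 (1 + v * (x / (x - 1))))"
proof -
  define t where "t = 1 + u + v"
  define p where "p = 1 + u * x"
  define w where "w = 1 - x * (1 + v)"
  define d where "d = 1 - x"
  have nz: "t \<noteq> 0" "p \<noteq> 0" "w \<noteq> 0" "d \<noteq> 0" using uv w x by (auto simp: t_def p_def w_def d_def)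
  have x1: "x - 1 \<noteq> 0" using x by simp
  have e1: "phi x v u = (-1) * (t / p)" by (simp add: phi_def t_def p_def)
  have e2: "1 + phi x v u + v = (-1) * (u * w / p)"
    using nz(2) unfolding phi_def t_def p_def w_def by (simp add: field_simps; simp add: algebra_simps)
  have e3: "1 + phi x v u * x = w / p"
    using nz(2) unfolding phi_def t_def p_def w_def by (simp add: field_simps; simp add: algebra_simps)
  have e4: "1 + v * (x / (x - 1)) = w / d"
    using x1 nz(4) unfolding w_def d_def by (simp add: field_simps; simp add: algebra_simps)
  have m: "mult_char a1" "mult_char a2" "mult_char b1" "mult_char b2" "mult_char c"
    using ch by (simp_all add: chars_iff)
  note cm = char_mult_chars char_inv_chars ch
  have civ: "\<And>\<omega> z. \<omega> \<in> chars \<Longrightarrow> char_inv \<omega> z = inverse (\<omega> z)" by (rule char_inv_val)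
  show ?thesis
    unfolding e2 e3 e4 unfolding e1 t_def[symmetric] p_def[symmetric] d_def[symmetric]
    using sign_cases[OF ch(2)] sign_cases[OF ch(3)] sign_cases[OF ch(5)]
    apply (simp only: civ cm char_mult_val mc_mult'[OF m(1)] mc_mult'[OF m(2)] mc_mult'[OF m(3)]
       mc_mult'[OF m(4)] mc_mult'[OF m(5)] mc_divide[OF m(1)] mc_divide[OF m(2)] mc_divide[OF m(3)]
       mc_divide[OF m(4)] mc_divide[OF m(5)])
    apply (elim disjE)
    apply (simp_all add: mc_eq0 m nz uv x field_simps)
    done
qed


lemma phi_e2:
  fixes x u v :: "'a::field"
  assumes "1 + u * x \<noteq> 0"
  shows "1 + phi x v u + v = - (u * (1 - x * (1 + v)) / (1 + u * x))"
  using assms unfolding phi_def by (simp add: field_simps; simp add: algebra_simps)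

lemma phi_e3:
  fixes x u v :: "'a::field"
  assumes "1 + u * x \<noteq> 0"
  shows "1 + phi x v u * x = (1 - x * (1 + v)) / (1 + u * x)"
  using assms unfolding phi_def by (simp add: field_simps; simp add: algebra_simps)

lemma aux_div: "(a::'a::field) \<noteq> 0 \<Longrightarrow> b \<noteq> 0 \<Longrightarrow> (u * a / b) / (a / b) = u"
  by (simp add: field_simps)

lemma phi_inv:
  fixes x u v :: "'a::field"
  assumes p: "1 + u * x \<noteq> 0" and w: "1 - x * (1 + v) \<noteq> 0"
  shows "phi x v (phi x v u) = u" "1 + phi x v u * x \<noteq> 0"
proof -
  show "1 + phi x v u * x \<noteq> 0" using phi_e3[OF p] p w by simp
  have "phi x v (phi x v u) = - (1 + phi x v u + v) / (1 + phi x v u * x)"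
    by (simp add: phi_def)
  also have "\<dots> = (u * (1 - x * (1 + v)) / (1 + u * x)) / ((1 - x * (1 + v)) / (1 + u * x))"
    unfolding phi_e2[OF p] phi_e3[OF p] by simp
  also have "\<dots> = u" by (rule aux_div[OF w p])
  finally show "phi x v (phi x v u) = u" .
qed

lemma ci0: "char_inv \<omega> 0 = 0" by (simp add: char_inv_def)
lemma cm0: "\<omega> \<in> chars \<Longrightarrow> char_mult \<omega> \<eta> 0 = 0" by (simp add: char_mult_def chars_iff mc_0)

lemma S_transform:
  fixes x :: "'a::{field,finite}"
  assumes ch: "a1 \<in> chars" "a2 \<in> chars" "b1 \<in> chars" "b2 \<in> chars" "c \<in> chars"
      and x: "x \<noteq> 0" "x \<noteq> 1"
  shows "(\<Sum>u\<in>UNIV. \<Sum>v\<in>UNIV. char_mult (char_inv (char_mult a2 b1)) c u * a2 v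
          * char_inv (char_mult (char_mult (char_mult (char_inv (char_mult a2 b1)) c) a2) (char_inv c)) (1 + u + v)
          * char_inv (char_mult (char_inv (char_mult a1 a2)) c) (1 + u * x)
          * char_inv (char_mult (char_mult (char_mult (char_mult a1 a2) b1) b2) (char_inv c)) (1 + v * (x / (x - 1))))
       = a2 (-1) * c (-1) * char_mult (char_mult (char_mult a1 a2) b1) (char_inv c) (1 - x)
         * (\<Sum>u\<in>UNIV. \<Sum>v\<in>UNIV. b1 u * a2 v * char_inv (char_mult (char_mult b1 a2) (char_inv c)) (1 + u + v)
            * char_inv a1 (1 + u * x) * char_inv b2 (1 + v * (x / (x - 1))))"
proof -
  define fR where "fR = (\<lambda>u v. char_mult (char_inv (char_mult a2 b1)) c u * a2 v
          * char_inv (char_mult (char_mult (char_mult (char_inv (char_mult a2 b1)) c) a2) (char_inv c)) (1 + u + v)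
          * char_inv (char_mult (char_inv (char_mult a1 a2)) c) (1 + u * x)
          * char_inv (char_mult (char_mult (char_mult (char_mult a1 a2) b1) b2) (char_inv c)) (1 + v * (x / (x - 1))))"
  define fL where "fL = (\<lambda>u v. b1 u * a2 v * char_inv (char_mult (char_mult b1 a2) (char_inv c)) (1 + u + v)
            * char_inv a1 (1 + u * x) * char_inv b2 (1 + v * (x / (x - 1))))"
  define \<kappa> where "\<kappa> = a2 (-1) * c (-1) * char_mult (char_mult (char_mult a1 a2) b1) (char_inv c) (1 - x)"
  have z: "a1 0 = 0" "a2 0 = 0" "b1 0 = 0" "b2 0 = 0" "c 0 = 0" using ch by (simp_all add: chars_iff mc_0)
  have inner: "(\<Sum>u\<in>UNIV. fR u v) = \<kappa> * (\<Sum>u\<in>UNIV. fL u v)" for v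
  proof (cases "1 - x * (1 + v) = 0")
    case True
    have "1 + v * (x / (x - 1)) = 0"
    proof -
      have x1: "x - 1 \<noteq> 0" using x by simp
      have "1 + v * (x / (x - 1)) = - (1 - x * (1 + v)) / (x - 1)"
        using x1 by (simp add: field_simps; simp add: algebra_simps)
      thus ?thesis using True by simp
    qed
    thus ?thesis by (simp add: fR_def fL_def ci0)
  next
    case False
    define T where "T = {u. 1 + u * x \<noteq> 0}"
    have "(\<Sum>u\<in>UNIV. fR u v) = (\<Sum>u\<in>T. fR u v)"
      by (rule sum.mono_neutral_right) (auto simp: T_def fR_def ci0)
    also have "\<dots> = (\<Sum>u\<in>T. fR (phi x v u) v)"
      by (rule sum.reindex_bij_witness[of _ "phi x v" "phi x v"])
         (auto simp: T_def phi_inv[OF _ False])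
    also have "\<dots> = (\<Sum>u\<in>T. \<kappa> * fL u v)"
    proof (rule sum.cong[OF refl])
      fix u assume "u \<in> T"
      hence p: "1 + u * x \<noteq> 0" by (simp add: T_def)
      consider "u = 0" | "1 + u + v = 0" | "v = 0" | "u \<noteq> 0" "1 + u + v \<noteq> 0" "v \<noteq> 0" by blast
      thus "fR (phi x v u) v = \<kappa> * fL u v"
      proof cases
        case 1
        have "1 + phi x v u + v = 0" using 1 by (simp add: phi_def)
        thus ?thesis using 1 by (simp add: fR_def fL_def ci0 z)
      next
        case 2
        have "phi x v u = 0" using 2 by (simp add: phi_def)
        thus ?thesis using 2 by (simp add: fR_def fL_def ci0 z char_mult_def)
      next
        case 3
        thus ?thesis by (simp add: fR_def fL_def z)
      next
        case 4
        show ?thesis unfolding fR_def fL_def \<kappa>_def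
          by (rule pointwise[OF ch x 4(1) 4(3) 4(2) p False])
      qed
    qed
    also have "\<dots> = \<kappa> * (\<Sum>u\<in>T. fL u v)" by (simp add: sum_distrib_left)
    also have "(\<Sum>u\<in>T. fL u v) = (\<Sum>u\<in>UNIV. fL u v)"
      by (rule sum.mono_neutral_left) (auto simp: T_def fL_def ci0)
    finally show ?thesis .
  qed
  have "(\<Sum>u\<in>UNIV. \<Sum>v\<in>UNIV. fR u v) = (\<Sum>v\<in>UNIV. \<Sum>u\<in>UNIV. fR u v)" by (rule sum.swap)
  also have "\<dots> = (\<Sum>v\<in>UNIV. \<kappa> * (\<Sum>u\<in>UNIV. fL u v))" by (simp only: inner)
  also have "\<dots> = \<kappa> * (\<Sum>v\<in>UNIV. \<Sum>u\<in>UNIV. fL u v)" by (simp add: sum_distrib_left)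
  also have "(\<Sum>v\<in>UNIV. \<Sum>u\<in>UNIV. fL u v) = (\<Sum>u\<in>UNIV. \<Sum>v\<in>UNIV. fL u v)" by (rule sum.swap)
  finally show ?thesis unfolding fR_def fL_def \<kappa>_def .
qed


lemma F3_swap2: "F3 \<psi> A1 A2 B1 B2 G x y = F3 \<psi> A1 B2 B1 A2 G x y"
  unfolding F3_def by (simp add: mult_ac)

lemma F3_swap1: "F3 \<psi> A1 A2 B1 B2 G x y = F3 \<psi> B1 A2 A1 B2 G x y"
  unfolding F3_def by (simp add: mult_ac)

lemma F3_zero: "F3 \<psi> A1 A2 B1 B2 G 0 y = 0"
  unfolding F3_def by (simp add: chars_iff mc_0)

lemma mult_inv_triv:
  assumes "K \<in> chars" "c \<in> chars" "char_mult K (char_inv c) = \<epsilon>"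
  shows "K = c"
proof
  fix z
  show "K z = c z"
  proof (cases "z = 0")
    case True thus ?thesis using assms by (simp add: chars_iff mc_0)
  next
    case False
    have "K z * inverse (c z) = 1"
      using fun_cong[OF assms(3), of z] False assms(2) by (simp add: char_mult_val char_inv_val triv_char_def)
    moreover have "c z \<noteq> 0" using assms(2) False by (simp add: chars_iff mc_nz)
    ultimately show ?thesis by (simp add: field_simps)
  qed
qed

lemma inv_mult_triv:
  assumes "K \<in> chars" "c \<in> chars" "char_mult (char_inv K) c = \<epsilon>"
  shows "c = K"
  using mult_inv_triv[OF assms(2) assms(1)] assms(3) char_mult_comm by metis

context
  fixes \<psi> :: "'a::{field,finite} \<Rightarrow> complex"
  assumes psi: "nontriv_add_char \<psi>"
begin

lemma gauss_pair_inv: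
  assumes "\<omega> \<in> chars" "\<omega> \<noteq> \<epsilon>"
  shows "gauss \<psi> \<omega> * gauss \<psi> (char_inv \<omega>) = \<omega> (-1) * of_nat CARD('a)"
proof -
  have "char_inv \<omega> \<noteq> \<epsilon>" by (rule char_inv_ne_triv[OF psi assms])
  hence "gauss0 \<psi> (char_inv \<omega>) = gauss \<psi> (char_inv \<omega>)" by (simp add: gauss0_def delta_char_def)
  thus ?thesis using gauss_prod[OF psi assms(1)] by simp
qed

end

theorem corollary3p15:
  fixes \<psi> :: "'a::{field,finite} \<Rightarrow> complex"
    and a1 a2 b1 b2 c :: "'a \<Rightarrow> complex"
    and l :: 'a
  assumes "nontriv_add_char \<psi>"
    and "a1 \<in> chars" "a2 \<in> chars" "b1 \<in> chars" "b2 \<in> chars" "c \<in> chars"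
    and "c \<notin> {char_mult a1 a2, char_mult b1 b2, char_mult a1 b2, char_mult a2 b1,
               char_mult (char_mult (char_mult a1 a2) b1) b2}"
    and "\<epsilon> \<notin> {a1, a2, b1, b2}"
    and "l \<noteq> 1"
  shows "char_mult (char_mult (char_mult a1 a2) b1) (char_inv c) (1 - l)
           * F3 \<psi> a1 a2 b1 b2 c l (l / (l - 1))
         = F3 \<psi> (char_mult (char_inv (char_mult a2 b1)) c)
                (char_mult (char_mult (char_mult (char_mult a1 a2) b1) b2) (char_inv c))
                (char_mult (char_inv (char_mult a1 a2)) c) a2 c l (l / (l - 1))"
proof (cases "l = 0")
  case True
  thus ?thesis by (simp add: F3_zero)
next
  case False
  note psi = assms(1)
  note ch = assms(2-6)
  have cne: "c \<noteq> char_mult a1 a2" "c \<noteq> char_mult a2 b1"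
      "c \<noteq> char_mult (char_mult (char_mult a1 a2) b1) b2" using assms(7) by auto
  have ene: "a1 \<noteq> \<epsilon>" "a2 \<noteq> \<epsilon>" "b1 \<noteq> \<epsilon>" "b2 \<noteq> \<epsilon>" using assms(8) by auto
  define y where "y = l / (l - 1)"
  have y: "y \<noteq> 0" using False assms(9) by (simp add: y_def)
  define A1' where "A1' = char_mult (char_inv (char_mult a2 b1)) c"
  define A2' where "A2' = char_mult (char_mult (char_mult (char_mult a1 a2) b1) b2) (char_inv c)"
  define B1' where "B1' = char_mult (char_inv (char_mult a1 a2)) c"
  define \<chi>L where "\<chi>L = char_mult (char_mult b1 a2) (char_inv c)"
  define \<chi>R where "\<chi>R = char_mult (char_mult A1' a2) (char_inv c)"
  note cm = char_mult_chars char_inv_chars ch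
  have chA1': "A1' \<in> chars" unfolding A1'_def by (intro cm)
  have chA2': "A2' \<in> chars" unfolding A2'_def by (intro cm)
  have chB1': "B1' \<in> chars" unfolding B1'_def by (intro cm)
  have chL: "\<chi>L \<in> chars" unfolding \<chi>L_def by (intro cm)
  have chR: "\<chi>R \<in> chars" unfolding \<chi>R_def by (intro cm chA1')
  have z: "a1 0 = 0" "a2 0 = 0" "b1 0 = 0" "b2 0 = 0" "c 0 = 0" using ch by (simp_all add: chars_iff mc_0)
  have nzv: "\<And>t. t \<noteq> 0 \<Longrightarrow> a2 t \<noteq> 0 \<and> b1 t \<noteq> 0 \<and> c t \<noteq> 0" using ch by (simp add: chars_iff mc_nz)
  have chiR_eq: "\<chi>R = char_inv b1"
  proof
    fix t show "\<chi>R t = char_inv b1 t"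
      using nzv[of t] z
      by (cases "t = 0") (simp_all add: \<chi>R_def A1'_def char_mult_val char_inv_def field_simps)
  qed
  have A1'_eq: "A1' = char_inv \<chi>L"
  proof
    fix t show "A1' t = char_inv \<chi>L t"
      using nzv[of t] z
      by (cases "t = 0") (simp_all add: \<chi>L_def A1'_def char_mult_val char_inv_def field_simps)
  qed
  have LneE: "\<chi>L \<noteq> \<epsilon>"
  proof
    assume "\<chi>L = \<epsilon>"
    hence "char_mult b1 a2 = c" by (rule mult_inv_triv[OF char_mult_chars[OF ch(3) ch(2)] ch(5), folded \<chi>L_def])
    thus False using cne(2) char_mult_comm by metis
  qed
  have B1'ne: "B1' \<noteq> \<epsilon>"
  proof
    assume "B1' = \<epsilon>"
    hence "c = char_mult a1 a2" by (rule inv_mult_triv[OF char_mult_chars[OF ch(1) ch(2)] ch(5), folded B1'_def])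
    thus False using cne(1) by simp
  qed
  have A2'ne: "A2' \<noteq> \<epsilon>"
  proof
    assume "A2' = \<epsilon>"
    moreover have "char_mult (char_mult (char_mult a1 a2) b1) b2 \<in> chars" by (intro cm)
    ultimately have "char_mult (char_mult (char_mult a1 a2) b1) b2 = c"
      using mult_inv_triv[of "char_mult (char_mult (char_mult a1 a2) b1) b2" c] ch(5) unfolding A2'_def by simp
    thus False using cne(3) by simp
  qed
  have RneE: "\<chi>R \<noteq> \<epsilon>" unfolding chiR_eq by (rule char_inv_ne_triv[OF psi ch(3) ene(3)])
  have L: "F3 \<psi> a1 a2 b1 b2 c l y
      = c (-1) * gauss0 \<psi> c * gauss \<psi> \<chi>L / (of_nat CARD('a) * gauss \<psi> b1 * gauss \<psi> a2)
        * (\<Sum>u\<in>UNIV. \<Sum>v\<in>UNIV. b1 u * a2 v * char_inv \<chi>L (1 + u + v)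
              * char_inv a1 (1 + u * l) * char_inv b2 (1 + v * y))"
    unfolding F3_swap2[of \<psi> a1 a2] \<chi>L_def
    by (rule REP[OF psi ch(1) ch(4) ch(3) ch(2) ch(5) ene(1) ene(4) LneE[unfolded \<chi>L_def] False y])
  have R: "F3 \<psi> A1' A2' B1' a2 c l y
      = c (-1) * gauss0 \<psi> c * gauss \<psi> \<chi>R / (of_nat CARD('a) * gauss \<psi> A1' * gauss \<psi> a2)
        * (\<Sum>u\<in>UNIV. \<Sum>v\<in>UNIV. A1' u * a2 v * char_inv \<chi>R (1 + u + v)
              * char_inv B1' (1 + u * l) * char_inv A2' (1 + v * y))"
    unfolding F3_swap1[of \<psi> A1'] \<chi>R_def
    by (rule REP[OF psi chB1' chA2' chA1' ch(2) ch(5) B1'ne A2'ne RneE[unfolded \<chi>R_def] False y])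
  define SL where "SL = (\<Sum>u\<in>UNIV. \<Sum>v\<in>UNIV. b1 u * a2 v * char_inv \<chi>L (1 + u + v)
              * char_inv a1 (1 + u * l) * char_inv b2 (1 + v * y))"
  have ST: "(\<Sum>u\<in>UNIV. \<Sum>v\<in>UNIV. A1' u * a2 v * char_inv \<chi>R (1 + u + v)
              * char_inv B1' (1 + u * l) * char_inv A2' (1 + v * y))
        = a2 (-1) * c (-1) * char_mult (char_mult (char_mult a1 a2) b1) (char_inv c) (1 - l) * SL"
    unfolding SL_def y_def \<chi>R_def \<chi>L_def A1'_def A2'_def B1'_def
    by (rule S_transform[OF ch False assms(9)])
  have q: "(of_nat CARD('a) :: complex) \<noteq> 0" by simp
  have g1: "gauss \<psi> \<chi>L * gauss \<psi> A1' = \<chi>L (-1) * of_nat CARD('a)"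
    unfolding A1'_eq by (rule gauss_pair_inv[OF psi chL LneE])
  have g2: "gauss \<psi> b1 * gauss \<psi> \<chi>R = b1 (-1) * of_nat CARD('a)"
    unfolding chiR_eq by (rule gauss_pair_inv[OF psi ch(3) ene(3)])
  have sL: "\<chi>L (-1) = b1 (-1) * a2 (-1) * c (-1)"
    using inv_m1[OF psi ch(5)] ch by (simp add: \<chi>L_def char_mult_val char_inv_val)
  have sq: "b1 (-1) * b1 (-1) = 1" "a2 (-1) * a2 (-1) = 1" "c (-1) * c (-1) = 1"
    using m1sq[OF psi] ch by auto
  have gnz: "gauss \<psi> b1 \<noteq> 0" "gauss \<psi> a2 \<noteq> 0" "gauss \<psi> A1' \<noteq> 0" "gauss \<psi> \<chi>R \<noteq> 0" "gauss \<psi> \<chi>L \<noteq> 0"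
    using gauss_nz[OF psi] ch chA1' chR chL by auto
  have m0: "b1 (-1) \<noteq> 0" using sq by auto
  have const: "gauss \<psi> \<chi>L / gauss \<psi> b1 = gauss \<psi> \<chi>R / gauss \<psi> A1' * (a2 (-1) * c (-1))"
  proof -
    have e1: "gauss \<psi> \<chi>L = \<chi>L (-1) * of_nat CARD('a) / gauss \<psi> A1'"
      using g1 gnz(3) by (simp add: field_simps)
    have e2: "gauss \<psi> b1 = b1 (-1) * of_nat CARD('a) / gauss \<psi> \<chi>R"
      using g2 gnz(4) by (simp add: field_simps)
    show ?thesis unfolding e1 e2 sL using m0 q gnz by (simp add: field_simps)
  qed
  have CL: "c (-1) * gauss0 \<psi> c * gauss \<psi> \<chi>L / (of_nat CARD('a) * gauss \<psi> b1 * gauss \<psi> a2)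
      = c (-1) * gauss0 \<psi> c / (of_nat CARD('a) * gauss \<psi> a2) * (gauss \<psi> \<chi>L / gauss \<psi> b1)"
    using gnz q by (simp add: field_simps)
  show ?thesis
    unfolding y_def[symmetric] A1'_def[symmetric] A2'_def[symmetric] B1'_def[symmetric]
    unfolding L R ST SL_def[symmetric] CL const
    using gnz q by (simp add: field_simps)
qed

end
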